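(* Let $s\in(0,1)$, $N>2s$, $1<p<\frac{N+2s}{N-2s}$, let $a$ satisfy $a(x)\in(0,1]$ for all $x$, $\inf a>0$, $|\{a\neq1\}|>0$, $a(x)\to1$ as $|x|\to\infty$, and let $f\in H^{-s}(\mathbb R^N)$ be a nonnegative functional. Then: (i) for all $u\in H^s(\mathbb R^N)$ and $\varepsilon\in(0,1)$, $$(1-\varepsilon)I_{\frac{a}{1-\varepsilon},0}(u)-\tfrac1{2\varepsilon}\|f\|_{H^{-s}}^2\le I_{a,f}(u)\le(1+\varepsilon)I_{\frac{a}{1+\varepsilon},0}(u)+\tfrac1{2\varepsilon}\|f\|_{H^{-s}}^2;$$ (ii) for all $v\in\tilde\Sigma_+$ and $\varepsilon\in(0,1)$, $$(1-\varepsilon)^{\frac{p+1}{p-1}}J_{a,0}(v)-\tfrac1{2\varepsilon}\|f\|_{H^{-s}}^2\le J_{a,f}(v)\le(1+\varepsilon)^{\frac{p+1}{p-1}}J_{a,0}(v)+\tfrac1{2\varepsilon}\|f\|_{H^{-s}}^2;$$ (iii) there exists $d_0>0$ such that if $\|f\|_{H^{-s}}\le d_0$ then $\inf_{v\in\tilde\Sigma_+}J_{a,f}(v)>0$.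
   Context: $\|u\|_{H^s}^2=\int_{\mathbb R^N}|u|^2+\iint_{\mathbb R^{2N}}\frac{|u(x)-u(y)|^2}{|x-y|^{N+2s}}dx\,dy$; $\langle\cdot,\cdot\rangle$ is the $H^{-s}$–$H^s$ duality; $f$ nonnegative means $\langle f,u\rangle\ge0$ for all nonnegative $u$. For $b\in L^\infty$, $g\in H^{-s}$: $I_{b,g}(u)=\frac12\|u\|_{H^s}^2-\frac1{p+1}\int_{\mathbb R^N}b(x)u_+^{p+1}dx-\langle g,u\rangle$, $u_+=\max\{u,0\}$. $\tilde\Sigma_+:=\{u\in H^s:\|u\|_{H^s}=1,\ u_+\not\equiv0\}$ and $J_{b,g}(v):=\max_{t>0}I_{b,g}(tv)$ for $v\in\tilde\Sigma_+$. *)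

theory Defs
  imports "HOL-Analysis.Analysis"
begin

definition hs_norm_sq :: "real \<Rightarrow> ('a::euclidean_space \<Rightarrow> real) \<Rightarrow> ennreal" where
  "hs_norm_sq s u =
     (\<integral>\<^sup>+ x. ennreal ((u x)\<^sup>2) \<partial>lborel)
   + (\<integral>\<^sup>+ z. ennreal ((u (fst z) - u (snd z))\<^sup>2
          / norm (fst z - snd z) powr (real DIM('a) + 2 * s)) \<partial>(lborel \<Otimes>\<^sub>M lborel))"

definition Hs :: "real \<Rightarrow> ('a::euclidean_space \<Rightarrow> real) set" where
  "Hs s = {u. u \<in> borel_measurable lborel \<and> hs_norm_sq s u < \<infinity>}"

definition hs_norm :: "real \<Rightarrow> ('a::euclidean_space \<Rightarrow> real) \<Rightarrow> real" where
  "hs_norm s u = sqrt (enn2real (hs_norm_sq s u))"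

text \<open>H^{-s}: bounded linear functionals on H^s (only their values on H^s matter).\<close>

definition Hminus :: "real \<Rightarrow> (('a::euclidean_space \<Rightarrow> real) \<Rightarrow> real) set" where
  "Hminus s = {g. (\<forall>u\<in>Hs s. \<forall>v\<in>Hs s. g (\<lambda>x. u x + v x) = g u + g v)
               \<and> (\<forall>u\<in>Hs s. \<forall>c::real. g (\<lambda>x. c * u x) = c * g u)
               \<and> (\<exists>C. \<forall>u\<in>Hs s. \<bar>g u\<bar> \<le> C * hs_norm s u)}"

definition hminus_norm :: "real \<Rightarrow> (('a::euclidean_space \<Rightarrow> real) \<Rightarrow> real) \<Rightarrow> real" where
  "hminus_norm s g = Sup {\<bar>g u\<bar> | u. u \<in> Hs s \<and> hs_norm s u \<le> 1}"

definition nonneg_functional :: "real \<Rightarrow> (('a::euclidean_space \<Rightarrow> real) \<Rightarrow> real) \<Rightarrow> bool" where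
  "nonneg_functional s g \<longleftrightarrow> (\<forall>u\<in>Hs s. (\<forall>x. u x \<ge> 0) \<longrightarrow> g u \<ge> 0)"

definition I_fun :: "real \<Rightarrow> real \<Rightarrow> ('a::euclidean_space \<Rightarrow> real)
     \<Rightarrow> (('a \<Rightarrow> real) \<Rightarrow> real) \<Rightarrow> ('a \<Rightarrow> real) \<Rightarrow> real" where
  "I_fun s p b g u = (1/2) * (hs_norm s u)\<^sup>2
      - (1 / (p + 1)) * (\<integral>x. b x * (max (u x) 0) powr (p + 1) \<partial>lborel)
      - g u"

definition Sigma_plus :: "real \<Rightarrow> ('a::euclidean_space \<Rightarrow> real) set" where
  "Sigma_plus s = {u \<in> Hs s. hs_norm s u = 1 \<and> \<not> (AE x in lborel. max (u x) 0 = 0)}"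

text \<open>J_{b,g}(v) = max_{t>0} I_{b,g}(t v), written as a supremum.\<close>

definition J_fun :: "real \<Rightarrow> real \<Rightarrow> ('a::euclidean_space \<Rightarrow> real)
     \<Rightarrow> (('a \<Rightarrow> real) \<Rightarrow> real) \<Rightarrow> ('a \<Rightarrow> real) \<Rightarrow> real" where
  "J_fun s p b g v = (SUP t\<in>{0<..}. I_fun s p b g (\<lambda>x. t * v x))"

end

theory Submission
  imports Defs
begin

lemma gag_meas[measurable]:
  assumes [measurable]: "u \<in> borel_measurable lborel"
  shows "(\<lambda>z. ennreal ((u (fst z) - u (snd z))\<^sup>2 / norm (fst z - snd z) powr e))
     \<in> borel_measurable (lborel \<Otimes>\<^sub>M (lborel::'a::euclidean_space measure))"
  by measurable

lemma hs_norm_sq_scale: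
  fixes u :: "'a::euclidean_space \<Rightarrow> real"
  assumes [measurable]: "u \<in> borel_measurable lborel"
  shows "hs_norm_sq s (\<lambda>x. c * u x) = ennreal (c\<^sup>2) * hs_norm_sq s u"
proof -
  have 1: "(\<integral>\<^sup>+ x. ennreal ((c * u x)\<^sup>2) \<partial>lborel) = ennreal (c\<^sup>2) * (\<integral>\<^sup>+ x. ennreal ((u x)\<^sup>2) \<partial>lborel)"
    by (subst nn_integral_cmult[symmetric]) (auto simp: ennreal_mult[symmetric] power_mult_distrib)
  have 2: "(\<integral>\<^sup>+ z. ennreal ((c * u (fst z) - c * u (snd z))\<^sup>2
          / norm (fst z - snd z) powr (real DIM('a) + 2 * s)) \<partial>(lborel \<Otimes>\<^sub>M lborel))
     = ennreal (c\<^sup>2) * (\<integral>\<^sup>+ z. ennreal ((u (fst z) - u (snd z))\<^sup>2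
          / norm (fst z - snd z) powr (real DIM('a) + 2 * s)) \<partial>(lborel \<Otimes>\<^sub>M lborel))"
    apply (subst nn_integral_cmult[symmetric])
     apply measurable
    apply (rule nn_integral_cong)
    apply (subst ennreal_mult[symmetric])
      apply simp
     apply simp
    apply (simp add: power_mult_distrib right_diff_distrib[symmetric])
    done
  show ?thesis unfolding hs_norm_sq_def 1 2 by (simp add: distrib_left)
qed

lemma Hs_scale: "u \<in> Hs s \<Longrightarrow> (\<lambda>x. c * u x) \<in> Hs s"
  unfolding Hs_def using hs_norm_sq_scale[of u s c]
  by (auto simp: ennreal_mult_less_top)

lemma hs_norm_scale: "u \<in> Hs s \<Longrightarrow> hs_norm s (\<lambda>x. c * u x) = \<bar>c\<bar> * hs_norm s u"
  unfolding hs_norm_def using hs_norm_sq_scale[of u s c]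
  by (auto simp: Hs_def enn2real_mult real_sqrt_mult)

lemma Hs_zero: "(\<lambda>x. 0) \<in> Hs s"
  unfolding Hs_def hs_norm_sq_def by simp

lemma hs_norm_nonneg: "hs_norm s u \<ge> 0"
  unfolding hs_norm_def by simp

lemma hminus_bound:
  assumes g: "g \<in> Hminus s" and u: "u \<in> Hs s"
  shows "\<bar>g u\<bar> \<le> hminus_norm s g * hs_norm s u"
proof -
  from g obtain C where C: "\<forall>w\<in>Hs s. \<bar>g w\<bar> \<le> C * hs_norm s w" unfolding Hminus_def by blast
  have hom: "\<And>w c. w \<in> Hs s \<Longrightarrow> g (\<lambda>x. c * w x) = c * g w" using g unfolding Hminus_def by blast
  define X where "X = {\<bar>g w\<bar> | w. w \<in> Hs s \<and> hs_norm s w \<le> 1}"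
  have bdd: "bdd_above X"
    unfolding X_def bdd_above_def
  proof (intro exI[of _ "max C 0"] allI ballI)
    fix y assume "y \<in> {\<bar>g w\<bar> | w. w \<in> Hs s \<and> hs_norm s w \<le> 1}"
    then obtain w where w: "w \<in> Hs s" "hs_norm s w \<le> 1" "y = \<bar>g w\<bar>" by blast
    have "y \<le> C * hs_norm s w" using C w by auto
    also have "\<dots> \<le> max C 0 * hs_norm s w" by (intro mult_right_mono) (auto simp: hs_norm_nonneg)
    also have "\<dots> \<le> max C 0" using w(2) by (intro mult_left_le) (auto simp: hs_norm_nonneg)
    finally show "y \<le> max C 0" .
  qed
  have hn: "hminus_norm s g = Sup X" unfolding hminus_norm_def X_def ..
  have z: "\<bar>g (\<lambda>x. 0)\<bar> \<in> X" unfolding X_def using Hs_zero[of s]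
    by (auto simp: hs_norm_def hs_norm_sq_def intro!: exI[of _ "\<lambda>x. 0"])
  have nn: "hminus_norm s g \<ge> 0"
    unfolding hn by (rule order_trans[OF _ cSup_upper[OF z bdd]]) simp
  show ?thesis
  proof (cases "hs_norm s u = 0")
    case True
    then have "\<bar>g u\<bar> \<le> 0" using C u by auto
    then show ?thesis using nn True by simp
  next
    case False
    then have pos: "hs_norm s u > 0" using hs_norm_nonneg[of s u] by simp
    define w where "w = (\<lambda>x. (1 / hs_norm s u) * u x)"
    have w: "w \<in> Hs s" "hs_norm s w = 1"
      unfolding w_def using Hs_scale[OF u, of "1 / hs_norm s u"] hs_norm_scale[OF u, of "1 / hs_norm s u"] pos
      by (auto simp del: divide_const_simps)
    have "\<bar>g w\<bar> \<in> X" unfolding X_def using w by auto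
    then have "\<bar>g w\<bar> \<le> hminus_norm s g" unfolding hn using bdd by (rule cSup_upper)
    moreover have "g w = g u / hs_norm s u" unfolding w_def using hom[OF u, of "1 / hs_norm s u"] by (simp del: divide_const_simps)
    ultimately have "\<bar>g u\<bar> / hs_norm s u \<le> hminus_norm s g" using pos by simp
    then show ?thesis using pos by (simp add: divide_le_eq mult.commute)
  qed
qed

lemma amgm_aux:
  fixes F n e :: real assumes "e > 0"
  shows "F * n \<le> e / 2 * n\<^sup>2 + 1 / (2 * e) * F\<^sup>2"
proof -
  have "0 \<le> (e * n - F)\<^sup>2" by simp
  then have "2 * e * (F * n) \<le> e\<^sup>2 * n\<^sup>2 + F\<^sup>2" by (simp add: power2_eq_square algebra_simps)
  then have "2 * e * (F * n) \<le> 2 * e * (e / 2 * n\<^sup>2 + 1 / (2 * e) * F\<^sup>2)"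
    using assms by (simp add: algebra_simps power2_eq_square)
  then show ?thesis using assms by simp
qed

lemma integral_scale_weight:
  fixes b w :: "'a::euclidean_space \<Rightarrow> real"
  shows "(\<integral>x. b x / c * w x \<partial>lborel) = (\<integral>x. b x * w x \<partial>lborel) / c"
proof -
  have "(\<lambda>x. b x / c * w x) = (\<lambda>x. b x * w x / c)" by auto
  then show ?thesis by (simp add: integral_divide_zero)
qed

lemma I_bounds:
  assumes g: "g \<in> Hminus s" and u: "u \<in> Hs s" and e: "0 < e" "e < 1"
  shows "(1 - e) * I_fun s p (\<lambda>x. b x / (1 - e)) (\<lambda>_. 0) u
          - 1 / (2 * e) * (hminus_norm s g)\<^sup>2 \<le> I_fun s p b g u"
    and "I_fun s p b g u \<le> (1 + e) * I_fun s p (\<lambda>x. b x / (1 + e)) (\<lambda>_. 0) u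
          + 1 / (2 * e) * (hminus_norm s g)\<^sup>2"
proof -
  define n where "n = hs_norm s u"
  define F where "F = hminus_norm s g"
  define Q where "Q = (\<integral>x. b x * (max (u x) 0) powr (p + 1) \<partial>lborel)"
  have n: "n \<ge> 0" unfolding n_def by (rule hs_norm_nonneg)
  have gu: "\<bar>g u\<bar> \<le> F * n" unfolding F_def n_def by (rule hminus_bound[OF g u])
  have am: "F * n \<le> e / 2 * n\<^sup>2 + 1 / (2 * e) * F\<^sup>2" by (rule amgm_aux[OF e(1)])
  have I1: "I_fun s p b g u = 1/2 * n\<^sup>2 - 1/(p+1) * Q - g u"
    unfolding I_fun_def n_def Q_def ..
  have I2: "I_fun s p (\<lambda>x. b x / c) (\<lambda>_. 0) u = 1/2 * n\<^sup>2 - 1/(p+1) * (Q / c)" for c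
    unfolding I_fun_def n_def Q_def integral_scale_weight by simp
  have ne: "1 - e \<noteq> 0" "1 + e \<noteq> 0" using e by auto
  have q1: "(1 - e) * (1/(p+1) * (Q / (1 - e))) = 1/(p+1) * Q" using ne by simp
  have q2: "(1 + e) * (1/(p+1) * (Q / (1 + e))) = 1/(p+1) * Q" using ne by simp
  have gl: "- g u \<ge> - (e / 2 * n\<^sup>2 + 1 / (2 * e) * F\<^sup>2)" "- g u \<le> e / 2 * n\<^sup>2 + 1 / (2 * e) * F\<^sup>2"
    using gu am by auto
  show "(1 - e) * I_fun s p (\<lambda>x. b x / (1 - e)) (\<lambda>_. 0) u
          - 1 / (2 * e) * (hminus_norm s g)\<^sup>2 \<le> I_fun s p b g u"
  proof -
    have "(1 - e) * (1/2 * n\<^sup>2) = 1/2 * n\<^sup>2 - e/2 * n\<^sup>2" by (simp add: field_simps)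
    then show ?thesis unfolding I1 I2 F_def[symmetric] right_diff_distrib q1 using gl(1)
      by linarith
  qed
  show "I_fun s p b g u \<le> (1 + e) * I_fun s p (\<lambda>x. b x / (1 + e)) (\<lambda>_. 0) u
          + 1 / (2 * e) * (hminus_norm s g)\<^sup>2"
  proof -
    have "(1 + e) * (1/2 * n\<^sup>2) = 1/2 * n\<^sup>2 + e/2 * n\<^sup>2" by (simp add: field_simps)
    then show ?thesis unfolding I1 I2 F_def[symmetric] right_diff_distrib q2 using gl(2)
      by linarith
  qed
qed

lemma I_scale:
  assumes g: "g \<in> Hminus s" and v: "v \<in> Hs s" and t: "t > 0" and p: "p > -1"
  shows "I_fun s p b g (\<lambda>x. t * v x) = t\<^sup>2 / 2 * (hs_norm s v)\<^sup>2
     - t powr (p + 1) / (p + 1) * (\<integral>x. b x * (max (v x) 0) powr (p + 1) \<partial>lborel) - t * g v"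
proof -
  have hom: "g (\<lambda>x. t * v x) = t * g v" using g v unfolding Hminus_def by blast
  have m: "max (t * y) 0 = t * max y 0" for y using t by (simp add: max_def mult_le_0_iff)
  have "(\<lambda>x. b x * (max (t * v x) 0) powr (p + 1)) = (\<lambda>x. t powr (p + 1) * (b x * (max (v x) 0) powr (p + 1)))"
    using t by (auto simp: m powr_mult)
  then have "(\<integral>x. b x * (max (t * v x) 0) powr (p + 1) \<partial>lborel) = t powr (p + 1) * (\<integral>x. b x * (max (v x) 0) powr (p + 1) \<partial>lborel)"
    by simp
  then show ?thesis unfolding I_fun_def hom hs_norm_scale[OF v] using t
    by (simp add: power_mult_distrib)
qed

definition phi :: "real \<Rightarrow> real \<Rightarrow> real" where
  "phi q B = (1/2 - 1/q) * B powr (- 2 / (q - 2))"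

lemma young_bound:
  fixes t B q :: real assumes t: "t > 0" and B: "B > 0" and q: "q > 2"
  shows "t\<^sup>2 / 2 - t powr q / q * B \<le> phi q B"
proof -
  define P where "P = q / 2"
  define Q where "Q = q / (q - 2)"
  have P: "P > 1" and Q: "Q > 1" and PQ: "1/P + 1/Q = 1"
    using q by (auto simp: P_def Q_def field_simps)
  define a where "a = t powr 2 * B powr (2 / q)"
  define b where "b = B powr (- 2 / q)"
  have ab: "a * b = t\<^sup>2" unfolding a_def b_def using t B
    by (simp add: powr_add[symmetric] powr_realpow)
  have aP: "a powr P = t powr q * B"
  proof -
    have "a powr P = (t powr 2) powr (q/2) * (B powr (2 / q)) powr (q/2)"
      unfolding a_def P_def using t B by (subst powr_mult) auto
    also have "(t powr 2) powr (q/2) = t powr q" by (subst powr_powr) simp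
    also have "(B powr (2 / q)) powr (q/2) = B" using B q by (subst powr_powr) simp
    finally show ?thesis .
  qed
  have bQ: "b powr Q = B powr (- 2 / (q - 2))" unfolding b_def Q_def using B q
    by (simp add: powr_powr)
  have "a * b \<le> a powr P / P + b powr Q / Q"
    by (rule Youngs_inequality[OF P Q PQ]) (auto simp: a_def b_def)
  then have "t\<^sup>2 \<le> t powr q * B / P + B powr (- 2 / (q - 2)) / Q"
    by (simp only: ab aP bQ)
  then have "t\<^sup>2 \<le> t powr q * B * (2 / q) + B powr (- 2 / (q - 2)) * ((q - 2) / q)"
    unfolding P_def Q_def by simp
  then have h: "t\<^sup>2 - t powr q * B * (2 / q) \<le> B powr (- 2 / (q - 2)) * ((q - 2) / q)" by linarith
  have "t\<^sup>2 / 2 - t powr q / q * B = (t\<^sup>2 - t powr q * B * (2 / q)) / 2" by (simp add: field_simps)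
  also have "\<dots> \<le> (B powr (- 2 / (q - 2)) * ((q - 2) / q)) / 2" using h by simp
  also have "\<dots> = phi q B" unfolding phi_def using q by (simp add: field_simps)
  finally show ?thesis .
qed

lemma young_eq:
  fixes B q :: real assumes B: "B > 0" and q: "q > 2"
  defines "t0 \<equiv> B powr (- 1 / (q - 2))"
  shows "t0 > 0" "t0\<^sup>2 / 2 - t0 powr q / q * B = phi q B"
proof -
  show "t0 > 0" unfolding t0_def using B by simp
  have 1: "t0\<^sup>2 = B powr (- 2 / (q - 2))" unfolding t0_def using B
    by (simp add: powr_realpow[symmetric] powr_powr)
  have b1: "B powr 1 = B" using B by simp
  have "t0 powr q * B = B powr (- q / (q - 2)) * B powr 1" unfolding t0_def b1
    by (simp add: powr_powr)
  also have "\<dots> = B powr (- q / (q - 2) + 1)" by (rule powr_add[symmetric])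
  also have "- q / (q - 2) + 1 = - 2 / (q - 2)" using q by (simp add: field_simps)
  finally have 2: "t0 powr q * B = B powr (- 2 / (q - 2))" .
  show "t0\<^sup>2 / 2 - t0 powr q / q * B = phi q B"
    unfolding phi_def using 1 2 by (simp add: algebra_simps)
qed

lemma phi_scale:
  assumes B: "B > 0" and c: "c > 0" and q: "q > 2"
  shows "c * phi q (B / c) = c powr (q / (q - 2)) * phi q B"
proof -
  have e1: "(B / c) powr (- 2 / (q - 2)) = c powr (2 / (q - 2)) * B powr (- 2 / (q - 2))"
    using B c by (simp add: powr_divide powr_minus divide_simps)
  have "c * c powr (2 / (q - 2)) = c powr (q / (q - 2))"
  proof -
    have "c * c powr (2 / (q - 2)) = c powr (1 + 2 / (q - 2))" using c by (simp add: powr_add)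
    also have "1 + 2 / (q - 2) = q / (q - 2)" using q by (simp add: field_simps)
    finally show ?thesis .
  qed
  have "c * phi q (B / c) = (1/2 - 1/q) * ((c * c powr (2/(q-2))) * B powr (-2/(q-2)))"
    unfolding phi_def e1 by (simp add: ac_simps)
  also have "\<dots> = c powr (q/(q-2)) * phi q B" unfolding \<open>c * c powr (2 / (q - 2)) = c powr (q / (q - 2))\<close> phi_def
    by (simp add: ac_simps)
  finally show ?thesis .
qed

lemma zero_Hminus: "(\<lambda>_. 0) \<in> Hminus s"
  unfolding Hminus_def by (auto intro!: exI[of _ 0])

lemma I_scale_c:
  assumes v: "v \<in> Hs s" "hs_norm s v = 1" and t: "t > 0" and p: "p > 1"
  shows "I_fun s p (\<lambda>x. b x / c) (\<lambda>_. 0) (\<lambda>x. t * v x) = t\<^sup>2 / 2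
     - t powr (p + 1) / (p + 1) * ((\<integral>x. b x * (max (v x) 0) powr (p + 1) \<partial>lborel) / c)"
  using I_scale[OF zero_Hminus v(1) t, of p "\<lambda>x. b x / c"] p v(2)
  by (simp add: integral_scale_weight)

lemma I_scale_1:
  assumes v: "v \<in> Hs s" "hs_norm s v = 1" and t: "t > 0" and p: "p > 1"
  shows "I_fun s p b (\<lambda>_. 0) (\<lambda>x. t * v x) = t\<^sup>2 / 2
     - t powr (p + 1) / (p + 1) * (\<integral>x. b x * (max (v x) 0) powr (p + 1) \<partial>lborel)"
  using I_scale_c[OF v t p, of b 1] by simp

lemma J_zero:
  assumes v: "v \<in> Hs s" "hs_norm s v = 1" and p: "p > 1"
    and A: "(\<integral>x. b x * (max (v x) 0) powr (p + 1) \<partial>lborel) > 0"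
  shows "J_fun s p b (\<lambda>_. 0) v = phi (p + 1) (\<integral>x. b x * (max (v x) 0) powr (p + 1) \<partial>lborel)"
proof -
  define A' where "A' = (\<integral>x. b x * (max (v x) 0) powr (p + 1) \<partial>lborel)"
  have q: "p + 1 > 2" using p by simp
  define t0 where "t0 = A' powr (- 1 / (p + 1 - 2))"
  have t0: "t0 > 0" "t0\<^sup>2 / 2 - t0 powr (p + 1) / (p + 1) * A' = phi (p + 1) A'"
    using young_eq[of A' "p + 1"] A q unfolding t0_def A'_def by auto
  show ?thesis unfolding J_fun_def A'_def[symmetric]
  proof (rule cSup_eq_maximum)
    show "phi (p + 1) A' \<in> (\<lambda>t. I_fun s p b (\<lambda>_. 0) (\<lambda>x. t * v x)) ` {0<..}"
      using t0 I_scale_1[OF v t0(1) p, of b] unfolding A'_def[symmetric]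
      by (intro image_eqI[of _ _ t0]) auto
  next
    fix y assume "y \<in> (\<lambda>t. I_fun s p b (\<lambda>_. 0) (\<lambda>x. t * v x)) ` {0<..}"
    then obtain t where t: "t > 0" "y = I_fun s p b (\<lambda>_. 0) (\<lambda>x. t * v x)" by auto
    show "y \<le> phi (p + 1) A'"
      using t I_scale_1[OF v t(1) p, of b] young_bound[OF t(1) _ q, of A'] A
      unfolding A'_def[symmetric] by simp
  qed
qed

lemma J_bounds:
  assumes g: "g \<in> Hminus s" and v: "v \<in> Hs s" "hs_norm s v = 1" and p: "p > 1"
    and A: "(\<integral>x. b x * (max (v x) 0) powr (p + 1) \<partial>lborel) > 0"
    and e: "0 < e" "e < 1"
  shows "(1 - e) powr ((p + 1) / (p - 1)) * J_fun s p b (\<lambda>_. 0) v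
          - 1 / (2 * e) * (hminus_norm s g)\<^sup>2 \<le> J_fun s p b g v"
    and "J_fun s p b g v \<le> (1 + e) powr ((p + 1) / (p - 1)) * J_fun s p b (\<lambda>_. 0) v
          + 1 / (2 * e) * (hminus_norm s g)\<^sup>2"
    and "bdd_above ((\<lambda>t. I_fun s p b g (\<lambda>x. t * v x)) ` {0<..})"
proof -
  define A' where "A' = (\<integral>x. b x * (max (v x) 0) powr (p + 1) \<partial>lborel)"
  define F where "F = hminus_norm s g"
  have A': "A' > 0" using A unfolding A'_def .
  have q: "p + 1 > 2" using p by simp
  have qq: "(p + 1) / (p + 1 - 2) = (p + 1) / (p - 1)" by simp
  have J0: "J_fun s p b (\<lambda>_. 0) v = phi (p + 1) A'" unfolding A'_def by (rule J_zero[OF v p A])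
  have upper: "I_fun s p b g (\<lambda>x. t * v x) \<le> (1 + e) * phi (p + 1) (A' / (1 + e)) + 1 / (2 * e) * F\<^sup>2"
    if t: "t > 0" for t
  proof -
    have "I_fun s p b g (\<lambda>x. t * v x) \<le> (1 + e) * I_fun s p (\<lambda>x. b x / (1 + e)) (\<lambda>_. 0) (\<lambda>x. t * v x)
          + 1 / (2 * e) * F\<^sup>2"
      unfolding F_def by (rule I_bounds(2)[OF g Hs_scale[OF v(1)] e])
    also have "I_fun s p (\<lambda>x. b x / (1 + e)) (\<lambda>_. 0) (\<lambda>x. t * v x) \<le> phi (p + 1) (A' / (1 + e))"
      unfolding I_scale_c[OF v t p] A'_def[symmetric]
      using young_bound[OF t _ q, of "A' / (1 + e)"] A' e by simp
    finally show ?thesis using e by simp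
  qed
  show bdd: "bdd_above ((\<lambda>t. I_fun s p b g (\<lambda>x. t * v x)) ` {0<..})"
    using upper by (intro bdd_aboveI2[of _ _ "(1 + e) * phi (p + 1) (A' / (1 + e)) + 1 / (2 * e) * F\<^sup>2"]) auto
  have "J_fun s p b g v \<le> (1 + e) * phi (p + 1) (A' / (1 + e)) + 1 / (2 * e) * F\<^sup>2"
    unfolding J_fun_def using upper by (intro cSUP_least) auto
  also have "(1 + e) * phi (p + 1) (A' / (1 + e)) = (1 + e) powr ((p + 1) / (p - 1)) * phi (p + 1) A'"
    using phi_scale[OF A' _ q, of "1 + e"] e by simp
  finally show "J_fun s p b g v \<le> (1 + e) powr ((p + 1) / (p - 1)) * J_fun s p b (\<lambda>_. 0) v
          + 1 / (2 * e) * (hminus_norm s g)\<^sup>2" unfolding J0 F_def .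
  define B where "B = A' / (1 - e)"
  have B: "B > 0" unfolding B_def using A' e by simp
  define t0 where "t0 = B powr (- 1 / (p + 1 - 2))"
  have t0: "t0 > 0" "t0\<^sup>2 / 2 - t0 powr (p + 1) / (p + 1) * B = phi (p + 1) B"
    using young_eq[OF B q] unfolding t0_def by auto
  have "(1 - e) powr ((p + 1) / (p - 1)) * phi (p + 1) A' = (1 - e) * phi (p + 1) B"
    unfolding B_def using phi_scale[OF A' _ q, of "1 - e"] e by simp
  also have "\<dots> = (1 - e) * I_fun s p (\<lambda>x. b x / (1 - e)) (\<lambda>_. 0) (\<lambda>x. t0 * v x)"
    unfolding I_scale_c[OF v t0(1) p] A'_def[symmetric] B_def[symmetric] t0(2) ..
  finally have "(1 - e) powr ((p + 1) / (p - 1)) * phi (p + 1) A' - 1 / (2 * e) * F\<^sup>2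
       \<le> I_fun s p b g (\<lambda>x. t0 * v x)"
    using I_bounds(1)[OF g Hs_scale[OF v(1)] e, of p b t0] unfolding F_def by simp
  also have "I_fun s p b g (\<lambda>x. t0 * v x) \<le> J_fun s p b g v"
    unfolding J_fun_def using bdd t0(1) by (intro cSUP_upper) auto
  finally show "(1 - e) powr ((p + 1) / (p - 1)) * J_fun s p b (\<lambda>_. 0) v
          - 1 / (2 * e) * (hminus_norm s g)\<^sup>2 \<le> J_fun s p b g v" unfolding J0 F_def .
qed

definition gam :: "real \<Rightarrow> nat \<Rightarrow> real" where
  "gam \<beta> j = 2 * (1 - \<beta> ^ Suc j) / (1 - \<beta>)"

fun Cb :: "real \<Rightarrow> real \<Rightarrow> nat \<Rightarrow> real" where
  "Cb K \<beta> 0 = 1"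
| "Cb K \<beta> (Suc j) = max 1 (K * Cb K \<beta> j powr \<beta> * 2 powr gam \<beta> (Suc j))"

lemma Cb_pos: "Cb K \<beta> j \<ge> 1"
  by (cases j) auto

lemma gam_Suc: "\<beta> < 1 \<Longrightarrow> gam \<beta> (Suc j) = 2 + \<beta> * gam \<beta> j"
  unfolding gam_def by (simp add: field_simps)

lemma gam_0: "\<beta> < 1 \<Longrightarrow> gam \<beta> 0 = 2"
proof -
  assume "\<beta> < 1"
  then have "1 - \<beta> \<noteq> 0" by simp
  then show ?thesis unfolding gam_def by (simp add: field_simps)
qed

lemma bootstrap:
  fixes a :: "nat \<Rightarrow> real"
  assumes a0: "\<And>k. 0 \<le> a k" and a1: "\<And>k. a k \<le> 2 powr (- 2 * real k)"
    and rec: "\<And>k. a (Suc k) \<le> K * 2 powr (- 2 * real k) * a k powr \<beta>"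
    and K: "K > 0" and \<beta>: "0 < \<beta>" "\<beta> < 1"
  shows "a k \<le> Cb K \<beta> j * 2 powr (- gam \<beta> j * real k)"
proof (induction j arbitrary: k)
  case 0
  then show ?case using a1[of k] gam_0[OF \<beta>(2)] by simp
next
  case (Suc j)
  define C where "C = Cb K \<beta> j"
  define g where "g = gam \<beta> j"
  have C: "C \<ge> 1" unfolding C_def by (rule Cb_pos)
  have g': "gam \<beta> (Suc j) = 2 + \<beta> * g" unfolding g_def by (rule gam_Suc[OF \<beta>(2)])
  show ?case
  proof (cases k)
    case 0
    have "a 0 \<le> 1" using a1[of 0] by simp
    also have "1 \<le> Cb K \<beta> (Suc j)" by (rule Cb_pos)
    finally show ?thesis using 0 by simp
  next
    case (Suc m)
    have IH: "a m \<le> C * 2 powr (- g * real m)" unfolding C_def g_def by (rule Suc.IH)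
    have "a (Suc m) \<le> K * 2 powr (- 2 * real m) * a m powr \<beta>" by (rule rec)
    also have "a m powr \<beta> \<le> (C * 2 powr (- g * real m)) powr \<beta>"
      using IH a0[of m] \<beta> by (intro powr_mono2) auto
    also have "(C * 2 powr (- g * real m)) powr \<beta> = C powr \<beta> * 2 powr (- \<beta> * g * real m)"
      using C by (simp add: powr_mult powr_powr algebra_simps)
    also have "K * 2 powr (- 2 * real m) * (C powr \<beta> * 2 powr (- \<beta> * g * real m))
        = K * C powr \<beta> * 2 powr (- (2 + \<beta> * g) * real m)"
      by (simp add: powr_add[symmetric] algebra_simps)
    also have "\<dots> = K * C powr \<beta> * 2 powr gam \<beta> (Suc j) * 2 powr (- gam \<beta> (Suc j) * real (Suc m))"
      unfolding g' by (simp add: powr_add[symmetric] algebra_simps)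
    also have "\<dots> \<le> Cb K \<beta> (Suc j) * 2 powr (- gam \<beta> (Suc j) * real (Suc m))"
      unfolding C_def by (intro mult_right_mono) auto
    finally show ?thesis using Suc K by (simp add: mult_left_mono)
  qed
qed

lemma ennreal_term_le_suminf: "(f :: nat \<Rightarrow> ennreal) k \<le> (\<Sum>i. f i)"
  using sum_le_suminf[of f "{k}"] by auto

lemma pw_bound:
  fixes y q :: real assumes q: "q \<ge> 2"
  shows "ennreal ((max y 0) powr q) \<le> ennreal (y\<^sup>2)
     + (\<Sum>k. ennreal (2 powr ((real k + 1) * q)) * indicator {z. z > 2 powr real k} y)"
proof (cases "y \<le> 1")
  case True
  have "(max y 0) powr q \<le> y\<^sup>2"
  proof (cases "y \<le> 0")
    case True then show ?thesis by simp
  next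
    case False
    then have "y powr q \<le> y powr 2" using \<open>y \<le> 1\<close> q by (intro powr_mono') auto
    then show ?thesis using False by (simp add: powr_realpow)
  qed
  then have "ennreal ((max y 0) powr q) \<le> ennreal (y\<^sup>2)" by (rule ennreal_leI)
  then show ?thesis by (rule add_increasing2[OF zero_le])
next
  case False
  then have y: "y > 1" by simp
  define c where "c = \<lceil>log 2 y\<rceil>"
  have lp: "log 2 y > 0" using y by simp
  then have c1: "c \<ge> 1" unfolding c_def by linarith
  define k where "k = nat c - 1"
  have kc: "real k + 1 = real_of_int c" unfolding k_def using c1 by (simp add: of_nat_diff)
  have up: "y \<le> 2 powr (real k + 1)"
  proof -
    have "log 2 y \<le> real k + 1" unfolding kc c_def by simp
    then show ?thesis using y by (simp add: log_le_iff)
  qed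
  have lo: "2 powr real k < y"
  proof -
    have "real k < log 2 y" using kc unfolding c_def by linarith
    then show ?thesis using y by (simp add: less_log_iff)
  qed
  have "(max y 0) powr q \<le> (2 powr (real k + 1)) powr q"
    using y up q by (intro powr_mono2) auto
  also have "\<dots> = 2 powr ((real k + 1) * q)" by (simp add: powr_powr)
  finally have "ennreal ((max y 0) powr q) \<le> ennreal (2 powr ((real k + 1) * q)) * indicator {z. z > 2 powr real k} y"
    using lo by (auto intro: ennreal_leI)
  also have "\<dots> \<le> (\<Sum>k. ennreal (2 powr ((real k + 1) * q)) * indicator {z. z > 2 powr real k} y)"
    by (rule ennreal_term_le_suminf)
  finally show ?thesis by (rule add_increasing[OF zero_le])
qed

lemma int_bound:
  fixes u :: "'a::euclidean_space \<Rightarrow> real"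
  assumes [measurable]: "u \<in> borel_measurable lborel" and q: "q \<ge> 2"
  shows "(\<integral>\<^sup>+x. ennreal ((max (u x) 0) powr q) \<partial>lborel) \<le> (\<integral>\<^sup>+x. ennreal ((u x)\<^sup>2) \<partial>lborel)
     + (\<Sum>k. ennreal (2 powr ((real k + 1) * q)) * emeasure lborel {x. u x > 2 powr real k})"
proof -
  have "(\<integral>\<^sup>+x. ennreal ((max (u x) 0) powr q) \<partial>lborel) \<le> (\<integral>\<^sup>+x. ennreal ((u x)\<^sup>2)
     + (\<Sum>k. ennreal (2 powr ((real k + 1) * q)) * indicator {z. u z > 2 powr real k} x) \<partial>lborel)"
    by (intro nn_integral_mono) (use pw_bound[OF q] in \<open>auto simp: indicator_def\<close>)
  also have "\<dots> = (\<integral>\<^sup>+x. ennreal ((u x)\<^sup>2) \<partial>lborel)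
     + (\<integral>\<^sup>+x. (\<Sum>k. ennreal (2 powr ((real k + 1) * q)) * indicator {z. u z > 2 powr real k} x) \<partial>lborel)"
    by (intro nn_integral_add) auto
  also have "(\<integral>\<^sup>+x. (\<Sum>k. ennreal (2 powr ((real k + 1) * q)) * indicator {z. u z > 2 powr real k} x) \<partial>lborel)
     = (\<Sum>k. \<integral>\<^sup>+x. ennreal (2 powr ((real k + 1) * q)) * indicator {z. u z > 2 powr real k} x \<partial>lborel)"
    by (intro nn_integral_suminf) auto
  also have "\<dots> = (\<Sum>k. ennreal (2 powr ((real k + 1) * q)) * emeasure lborel {x. u x > 2 powr real k})"
    by (intro suminf_cong nn_integral_cmult_indicator) auto
  finally show ?thesis .
qed

lemma cheb:
  fixes u :: "'a::euclidean_space \<Rightarrow> real"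
  assumes [measurable]: "u \<in> borel_measurable lborel" and l: "l > 0"
  shows "ennreal (l\<^sup>2) * emeasure lborel {x. u x > l} \<le> (\<integral>\<^sup>+x. ennreal ((u x)\<^sup>2) \<partial>lborel)"
proof -
  have "ennreal (l\<^sup>2) * emeasure lborel {x. u x > l} = (\<integral>\<^sup>+x. ennreal (l\<^sup>2) * indicator {x. u x > l} x \<partial>lborel)"
    by (rule nn_integral_cmult_indicator[symmetric]) auto
  also have "\<dots> \<le> (\<integral>\<^sup>+x. ennreal ((u x)\<^sup>2) \<partial>lborel)"
  proof (intro nn_integral_mono)
    fix x
    show "ennreal (l\<^sup>2) * indicator {x. u x > l} x \<le> ennreal ((u x)\<^sup>2)"
    proof (cases "u x > l")
      case True
      then have "l\<^sup>2 \<le> (u x)\<^sup>2" using l by (intro power_mono) auto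
      then show ?thesis using True by (auto intro: ennreal_leI)
    qed auto
  qed
  finally show ?thesis .
qed

lemma key_level:
  fixes u :: "'a::euclidean_space \<Rightarrow> real"
  assumes [measurable]: "u \<in> borel_measurable lborel" and l: "l > 0" and R: "R > 0" and e: "e \<ge> 0"
  shows "ennreal (l\<^sup>2 / R powr e) * emeasure lborel {x. u x > 2 * l}
      * (ennreal (unit_ball_vol (real DIM('a)) * R ^ DIM('a)) - emeasure lborel {x. u x > l})
    \<le> (\<integral>\<^sup>+ z. ennreal ((u (fst z) - u (snd z))\<^sup>2 / norm (fst z - snd z) powr e) \<partial>(lborel \<Otimes>\<^sub>M lborel))"
proof -
  define W where "W = ennreal (unit_ball_vol (real DIM('a)) * R ^ DIM('a))"
  define m where "m = emeasure lborel {x. u x > l}"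
  define c where "c = ennreal (l\<^sup>2 / R powr e)"
  define F where "F = (\<lambda>z. ennreal ((u (fst z) - u (snd z))\<^sup>2 / norm (fst z - snd z) powr e))"
  have Fm: "F \<in> borel_measurable (lborel \<Otimes>\<^sub>M lborel)" unfolding F_def by measurable
  have pw: "c * (W - m) * indicator {x. u x > 2 * l} x \<le> (\<integral>\<^sup>+y. F (x, y) \<partial>lborel)" for x
  proof (cases "u x > 2 * l")
    case True
    define E where "E = ball x R \<inter> {y. u y \<le> l}"
    have "ball x R \<in> sets lborel" by simp
    moreover have "{y. u y \<le> l} \<in> sets lborel" by measurable
    ultimately have Em: "E \<in> sets lborel" unfolding E_def by (rule sets.Int)
    have "W = emeasure lborel (ball x R)" unfolding W_def using R by (simp add: emeasure_ball)
    also have "\<dots> \<le> emeasure lborel ({y. u y > l} \<union> E)"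
      by (intro emeasure_mono) (auto simp: E_def)
    also have "\<dots> \<le> m + emeasure lborel E" unfolding m_def
      by (rule emeasure_subadditive) (use Em in auto)
    finally have "W - m \<le> emeasure lborel E" unfolding W_def by (simp add: ennreal_minus_le_iff)
    then have "c * (W - m) \<le> c * emeasure lborel E" by (rule mult_left_mono) simp
    also have "\<dots> = (\<integral>\<^sup>+y. c * indicator E y \<partial>lborel)" by (rule nn_integral_cmult_indicator[symmetric, OF Em])
    also have "\<dots> \<le> (\<integral>\<^sup>+y. F (x, y) \<partial>lborel)"
    proof (intro nn_integral_mono)
      fix y
      show "c * indicator E y \<le> F (x, y)"
      proof (cases "y \<in> E")
        case yE: True
        then have uy: "u y \<le> l" and dxy: "dist x y < R" by (auto simp: E_def)
        have d: "l < u x - u y" using True uy by simp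
        then have "x \<noteq> y" using l by auto
        then have np: "0 < norm (x - y)" by simp
        have "norm (x - y) < R" using dxy by (simp add: dist_norm)
        then have "norm (x - y) powr e \<le> R powr e" using np e by (intro powr_mono2) auto
        moreover have "l\<^sup>2 \<le> (u x - u y)\<^sup>2" using d l by (intro power_mono) auto
        moreover have "0 < norm (x - y) powr e" using np by simp
        ultimately have "l\<^sup>2 / R powr e \<le> (u x - u y)\<^sup>2 / norm (x - y) powr e"
          by (intro frac_le) auto
        then show ?thesis using yE unfolding c_def F_def by (auto intro: ennreal_leI)
      qed simp
    qed
    finally show ?thesis using True by simp
  qed simp
  have "c * (W - m) * emeasure lborel {x. u x > 2 * l}
      = (\<integral>\<^sup>+x. c * (W - m) * indicator {x. u x > 2 * l} x \<partial>lborel)"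
    by (rule nn_integral_cmult_indicator[symmetric]) auto
  also have "\<dots> \<le> (\<integral>\<^sup>+x. \<integral>\<^sup>+y. F (x, y) \<partial>lborel \<partial>lborel)"
    by (intro nn_integral_mono pw)
  also have "\<dots> = integral\<^sup>N (lborel \<Otimes>\<^sub>M lborel) F"
    by (rule lborel.nn_integral_fst[OF Fm])
  finally show ?thesis unfolding F_def c_def W_def m_def by (simp add: ac_simps)
qed

lemma level_rec:
  fixes u :: "'a::euclidean_space \<Rightarrow> real"
  assumes [measurable]: "u \<in> borel_measurable lborel" and l: "l > 0" and s: "s > 0"
    and G: "(\<integral>\<^sup>+ z. ennreal ((u (fst z) - u (snd z))\<^sup>2 / norm (fst z - snd z) powr (real DIM('a) + 2 * s))
            \<partial>(lborel \<Otimes>\<^sub>M lborel)) \<le> 1"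
    and fin1: "emeasure lborel {x. u x > l} < \<infinity>"
  shows "measure lborel {x. u x > 2 * l} \<le> (2 / unit_ball_vol (real DIM('a))) powr (1 + 2 * s / real DIM('a))
           * (1 / l\<^sup>2) * measure lborel {x. u x > l} powr (2 * s / real DIM('a))"
proof -
  define N where "N = real DIM('a)"
  define \<omega> where "\<omega> = unit_ball_vol N"
  define \<beta> where "\<beta> = 2 * s / N"
  define m where "m = measure lborel {x. u x > l}"
  define m2 where "m2 = measure lborel {x. u x > 2 * l}"
  have Npos: "N > 0" unfolding N_def by simp
  have \<omega>: "\<omega> > 0" unfolding \<omega>_def N_def by simp
  have sub: "{x. u x > 2 * l} \<subseteq> {x. u x > l}" using l by auto
  have fin2: "emeasure lborel {x. u x > 2 * l} < \<infinity>"
    using emeasure_mono[OF sub, of lborel] fin1 by auto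
  have em1: "emeasure lborel {x. u x > l} = ennreal m" unfolding m_def
    using fin1 by (simp add: emeasure_eq_ennreal_measure)
  have em2: "emeasure lborel {x. u x > 2 * l} = ennreal m2" unfolding m2_def
    using fin2 by (simp add: emeasure_eq_ennreal_measure)
  have m0: "m \<ge> 0" "m2 \<ge> 0" unfolding m_def m2_def by auto
  have m2m: "m2 \<le> m" unfolding m_def m2_def using fin1 sub
    by (intro measure_mono_fmeasurable) (auto simp: fmeasurable_def)
  show ?thesis
  proof (cases "m = 0")
    case True
    then show ?thesis using m2m m0 unfolding m_def[symmetric] m2_def[symmetric] by simp
  next
    case False
    then have mp: "m > 0" using m0 by simp
    define R where "R = (2 * m / \<omega>) powr (1 / N)"
    have R: "R > 0" unfolding R_def using mp \<omega> by simp
    have RN: "R ^ DIM('a) = 2 * m / \<omega>"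
    proof -
      have "R ^ DIM('a) = R powr N" unfolding N_def using R by (simp add: powr_realpow)
      also have "\<dots> = 2 * m / \<omega>" unfolding R_def using Npos mp \<omega> by (simp add: powr_powr)
      finally show ?thesis .
    qed
    have Re: "R powr (N + 2 * s) = (2 * m / \<omega>) powr (1 + \<beta>)"
      unfolding R_def \<beta>_def using Npos mp \<omega> by (simp add: powr_powr add_divide_distrib)
    have W: "ennreal (unit_ball_vol (real DIM('a)) * R ^ DIM('a)) - emeasure lborel {x. u x > l} = ennreal m"
      unfolding RN em1 \<omega>_def[symmetric, unfolded N_def] using \<omega> m0
      by (subst ennreal_minus) auto
    have "ennreal (l\<^sup>2 / R powr (N + 2 * s)) * ennreal m2 * ennreal m \<le> 1"
      using key_level[of u l R "N + 2 * s"] l R s Npos G unfolding W em2 N_def by simp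
    then have "l\<^sup>2 / R powr (N + 2 * s) * m2 * m \<le> 1"
      using m0 l R by (simp add: ennreal_mult[symmetric] del: ennreal_mult)
    then have "m2 \<le> R powr (N + 2 * s) / (l\<^sup>2 * m)"
      using mp l R by (simp add: field_simps)
    also have "R powr (N + 2 * s) / (l\<^sup>2 * m) = (2 / \<omega>) powr (1 + \<beta>) * (1 / l\<^sup>2) * m powr \<beta>"
    proof -
      have "(2 * m / \<omega>) powr (1 + \<beta>) = (2 / \<omega>) powr (1 + \<beta>) * (m powr 1 * m powr \<beta>)"
      proof -
        have "(2 * m / \<omega>) powr (1 + \<beta>) = ((2 / \<omega>) * m) powr (1 + \<beta>)" by simp
        also have "\<dots> = (2 / \<omega>) powr (1 + \<beta>) * m powr (1 + \<beta>)"
          using mp \<omega> powr_mult[of "2 / \<omega>" m "1 + \<beta>"] by simp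
        also have "m powr (1 + \<beta>) = m powr 1 * m powr \<beta>" by (rule powr_add)
        finally show ?thesis .
      qed
      then show ?thesis unfolding Re using mp by (simp add: field_simps)
    qed
    finally show ?thesis unfolding m2_def m_def \<beta>_def N_def \<omega>_def by simp
  qed
qed

lemma geom_ennreal:
  assumes r: "0 \<le> r" "r < 1" and c: "c \<ge> 0"
  shows "(\<Sum>k. ennreal (c * r ^ k)) = ennreal (c / (1 - r))"
proof -
  have sm: "summable (\<lambda>k. c * r ^ k)" using r by (intro summable_mult summable_geometric) auto
  have "(\<Sum>k. ennreal (c * r ^ k)) = ennreal (\<Sum>k. c * r ^ k)"
    using r c by (intro suminf_ennreal2 sm) auto
  also have "(\<Sum>k. c * r ^ k) = c * (\<Sum>k. r ^ k)" using r by (intro suminf_mult summable_geometric) auto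
  also have "(\<Sum>k. r ^ k) = 1 / (1 - r)" using r by (intro suminf_geometric) auto
  finally show ?thesis by simp
qed

lemma embed:
  fixes s q :: real
  assumes s: "0 < s" and N: "real DIM('a) > 2 * s"
    and q: "2 < q" "q < 2 * real DIM('a) / (real DIM('a) - 2 * s)"
  shows "\<exists>S. \<forall>u::'a::euclidean_space \<Rightarrow> real. u \<in> Hs s \<longrightarrow> hs_norm_sq s u \<le> 1 \<longrightarrow>
           (\<integral>\<^sup>+x. ennreal ((max (u x) 0) powr q) \<partial>lborel) \<le> ennreal S"
proof -
  define N where "N = real DIM('a)"
  define \<omega> where "\<omega> = unit_ball_vol N"
  define \<beta> where "\<beta> = 2 * s / N"
  define K where "K = (2 / \<omega>) powr (1 + \<beta>)"
  have Npos: "N > 0" unfolding N_def by simp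
  have \<omega>: "\<omega> > 0" unfolding \<omega>_def N_def by simp
  have \<beta>: "0 < \<beta>" "\<beta> < 1" unfolding \<beta>_def using s N Npos unfolding N_def by auto
  have K: "K > 0" unfolding K_def using \<omega> by simp
  define \<delta> where "\<delta> = 1 - q * (1 - \<beta>) / 2"
  have qb: "q * (1 - \<beta>) < 2"
  proof -
    have "1 - \<beta> = (N - 2 * s) / N" unfolding \<beta>_def using Npos by (simp add: field_simps)
    moreover have "q * ((N - 2 * s) / N) < 2"
      using q(2) N Npos unfolding N_def[symmetric] by (simp add: field_simps)
    ultimately show ?thesis by simp
  qed
  have \<delta>: "\<delta> > 0" unfolding \<delta>_def using qb by simp
  have "\<forall>\<^sub>F n in sequentially. \<bar>\<beta> ^ n\<bar> < \<delta>"
    using \<beta> \<delta> by (intro Archimedean_eventually_pow_inverse) auto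
  then obtain j where j: "\<bar>\<beta> ^ j\<bar> < \<delta>" by (auto simp: eventually_sequentially)
  define \<gamma> where "\<gamma> = gam \<beta> j"
  have "\<beta> ^ Suc j \<le> \<beta> ^ j" using \<beta> by (intro power_decreasing) auto
  then have bj: "\<beta> ^ Suc j < \<delta>" using j by simp
  have \<gamma>q: "\<gamma> > q"
  proof -
    have "2 * (1 - \<beta> ^ Suc j) > q * (1 - \<beta>)" using bj unfolding \<delta>_def by simp
    then show ?thesis unfolding \<gamma>_def gam_def using \<beta> by (simp add: field_simps)
  qed
  define C where "C = Cb K \<beta> j"
  have C: "C \<ge> 1" unfolding C_def by (rule Cb_pos)
  define r where "r = 2 powr (q - \<gamma>)"
  have r: "0 \<le> r" "r < 1" unfolding r_def using \<gamma>q powr_less_mono[of "q - \<gamma>" 0 2] by auto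
  define S where "S = 1 + 2 powr q * C / (1 - r)"
  show ?thesis
  proof (intro exI[of _ S] allI impI)
    fix u :: "'a \<Rightarrow> real"
    assume u: "u \<in> Hs s" and un: "hs_norm_sq s u \<le> 1"
    have [measurable]: "u \<in> borel_measurable lborel" using u unfolding Hs_def by auto
    define L where "L = (\<integral>\<^sup>+ x. ennreal ((u x)\<^sup>2) \<partial>lborel)"
    define G where "G = (\<integral>\<^sup>+ z. ennreal ((u (fst z) - u (snd z))\<^sup>2
          / norm (fst z - snd z) powr (real DIM('a) + 2 * s)) \<partial>(lborel \<Otimes>\<^sub>M lborel))"
    have LG: "L + G \<le> 1" using un unfolding hs_norm_sq_def L_def G_def .
    have L1: "L \<le> 1" using LG by (rule order_trans[rotated]) simp
    have G1: "G \<le> 1" using LG by (rule order_trans[rotated]) simp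
    define a where "a = (\<lambda>k::nat. measure lborel {x. u x > 2 powr real k})"
    have chebk: "ennreal ((2 powr real k)\<^sup>2) * emeasure lborel {x. u x > 2 powr real k} \<le> 1" for k
      using cheb[of u "2 powr real k"] L1 unfolding L_def by simp
    have fin: "emeasure lborel {x. u x > 2 powr real k} < \<infinity>" for k
    proof (rule ccontr)
      assume "\<not> ?thesis"
      then have "emeasure lborel {x. u x > 2 powr real k} = \<infinity>" by (simp add: less_top[symmetric])
      then show False using chebk[of k] by (simp add: ennreal_mult_top top_unique)
    qed
    have ema: "emeasure lborel {x. u x > 2 powr real k} = ennreal (a k)" for k
      unfolding a_def using fin[of k] by (simp add: emeasure_eq_ennreal_measure)
    have a0: "a k \<ge> 0" for k unfolding a_def by simp
    have pk: "(2 powr real k)\<^sup>2 = 2 powr (2 * real k)" for k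
      by (simp add: power2_eq_square powr_add[symmetric])
    have a1: "a k \<le> 2 powr (- 2 * real k)" for k
    proof -
      have "ennreal ((2 powr real k)\<^sup>2 * a k) \<le> 1"
        using chebk[of k] unfolding ema by (simp add: ennreal_mult a0)
      then have "2 powr (2 * real k) * a k \<le> 1" unfolding pk by (simp add: ennreal_le_1)
      then have "a k \<le> 1 / 2 powr (2 * real k)" by (simp add: field_simps)
      then show ?thesis by (simp add: powr_minus divide_inverse)
    qed
    have rec: "a (Suc k) \<le> K * 2 powr (- 2 * real k) * a k powr \<beta>" for k
    proof -
      have Keq: "(2 / unit_ball_vol (real DIM('a))) powr (1 + \<beta>) = K"
        unfolding K_def \<omega>_def N_def ..
      have beq: "2 * s / real DIM('a) = \<beta>" unfolding \<beta>_def N_def ..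
      have lp: "(0::real) < 2 powr real k" by simp
      have um: "u \<in> borel_measurable lborel" by measurable
      have "measure lborel {x. u x > 2 * 2 powr real k} \<le> K * (1 / (2 powr real k)\<^sup>2) * a k powr \<beta>"
        using level_rec[OF um lp s G1[unfolded G_def] fin[of k]] unfolding beq Keq a_def .
      moreover have "2 * 2 powr real k = 2 powr real (Suc k)" by (simp add: powr_add)
      moreover have "1 / (2 powr real k)\<^sup>2 = 2 powr (- 2 * real k)" unfolding pk by (simp add: powr_minus divide_inverse)
      ultimately show ?thesis unfolding a_def by simp
    qed
    have ab: "a k \<le> C * 2 powr (- \<gamma> * real k)" for k
      unfolding C_def \<gamma>_def by (rule bootstrap[OF a0 a1 rec K \<beta>])
    have "(\<integral>\<^sup>+x. ennreal ((max (u x) 0) powr q) \<partial>lborel) \<le> L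
      + (\<Sum>k. ennreal (2 powr ((real k + 1) * q)) * emeasure lborel {x. u x > 2 powr real k})"
      unfolding L_def using q by (intro int_bound) auto
    moreover have "(\<Sum>k. ennreal (2 powr ((real k + 1) * q)) * emeasure lborel {x. u x > 2 powr real k})
        \<le> (\<Sum>k. ennreal (2 powr q * C * r ^ k))"
    proof (intro suminf_le summableI)
      fix k
      have "2 powr ((real k + 1) * q) * a k \<le> 2 powr ((real k + 1) * q) * (C * 2 powr (- \<gamma> * real k))"
        using ab[of k] by (intro mult_left_mono) auto
      also have "\<dots> = 2 powr q * C * r ^ k"
      proof -
        have rp: "r > 0" unfolding r_def by simp
        have "r ^ k = r powr real k" using rp by (rule powr_realpow[symmetric])
        also have "\<dots> = 2 powr ((q - \<gamma>) * real k)" unfolding r_def by (rule powr_powr)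
        finally have "r ^ k = 2 powr ((q - \<gamma>) * real k)" .
        moreover have "2 powr ((real k + 1) * q) * 2 powr (- \<gamma> * real k) = 2 powr q * 2 powr ((q - \<gamma>) * real k)"
        proof -
          have ee: "(real k + 1) * q + - \<gamma> * real k = q + (q - \<gamma>) * real k" by (simp add: algebra_simps)
          show ?thesis by (simp only: powr_add[symmetric] ee)
        qed
        ultimately have "2 powr ((real k + 1) * q) * 2 powr (- \<gamma> * real k) = 2 powr q * r ^ k" by simp
        then show ?thesis by (simp only: mult.assoc mult.commute mult.left_commute)
      qed
      finally show "ennreal (2 powr ((real k + 1) * q)) * emeasure lborel {x. u x > 2 powr real k}
          \<le> ennreal (2 powr q * C * r ^ k)"
        unfolding ema
      proof -
        assume h: "2 powr ((real k + 1) * q) * a k \<le> 2 powr q * C * r ^ k"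
        have "ennreal (2 powr ((real k + 1) * q)) * ennreal (a k) = ennreal (2 powr ((real k + 1) * q) * a k)"
          by (rule ennreal_mult[symmetric]) (simp_all add: a0)
        also have "\<dots> \<le> ennreal (2 powr q * C * r ^ k)" using h by (rule ennreal_leI)
        finally show "ennreal (2 powr ((real k + 1) * q)) * ennreal (a k) \<le> ennreal (2 powr q * C * r ^ k)" .
      qed
    qed
    moreover have "(\<Sum>k. ennreal (2 powr q * C * r ^ k)) = ennreal (2 powr q * C / (1 - r))"
      using geom_ennreal[OF r, of "2 powr q * C"] C by simp
    ultimately have Xb: "(\<integral>\<^sup>+x. ennreal ((max (u x) 0) powr q) \<partial>lborel) \<le> L + ennreal (2 powr q * C / (1 - r))"
      by (metis (no_types, lifting) add_left_mono order_trans)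
    have nn: "0 \<le> 2 powr q * C / (1 - r)" using C r by simp
    have "L + ennreal (2 powr q * C / (1 - r)) \<le> 1 + ennreal (2 powr q * C / (1 - r))"
      using L1 by (rule add_right_mono)
    also have "1 + ennreal (2 powr q * C / (1 - r)) = ennreal S"
      unfolding S_def using ennreal_plus[OF _ nn, of 1] by simp
    finally show "(\<integral>\<^sup>+x. ennreal ((max (u x) 0) powr q) \<partial>lborel) \<le> ennreal S"
      using Xb by (rule order_trans[rotated])
  qed
qed

definition kern :: "real \<Rightarrow> 'a::euclidean_space \<Rightarrow> real" where
  "kern e h = min 1 ((norm h)\<^sup>2) / norm h powr e"

lemma dyad:
  fixes t :: real assumes "t \<ge> 1"
  shows "\<exists>j::nat. 2 powr real j \<le> t \<and> t < 2 powr (real j + 1)"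
proof -
  have l: "log 2 t \<ge> 0" using assms by simp
  define j where "j = nat \<lfloor>log 2 t\<rfloor>"
  have jr: "real j = of_int \<lfloor>log 2 t\<rfloor>" unfolding j_def using l by simp
  have "real j \<le> log 2 t" unfolding jr by simp
  then have 1: "2 powr real j \<le> t" using assms by (simp add: le_log_iff)
  have "log 2 t < real j + 1" unfolding jr by linarith
  then have 2: "t < 2 powr (real j + 1)" using assms by (simp add: log_less_iff)
  show ?thesis using 1 2 by blast
qed

lemma kern_bound:
  fixes h :: "'a::euclidean_space" and s :: real
  assumes s: "0 < s" "s < 1"
  defines "N \<equiv> real DIM('a)"
  shows "ennreal (kern (N + 2 * s) h) \<le>
     (\<Sum>j. ennreal (2 powr (- real j * (N + 2 * s))) * indicator (ball 0 (2 powr (real j + 1))) h)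
   + (\<Sum>j. ennreal (2 powr (- real j * (2 - 2 * s)) * 2 powr ((real j + 1) * N)) * indicator (ball 0 (2 powr (1 - real j))) h)"
  (is "_ \<le> ?A + ?B")
proof -
  define t where "t = norm h"
  define e where "e = N + 2 * s"
  have N0: "N \<ge> 0" unfolding N_def by simp
  have e0: "e \<ge> 0" unfolding e_def using N0 s by simp
  show ?thesis
  proof (cases "h = 0")
    case True
    then show ?thesis by (simp add: kern_def)
  next
    case False
    then have t0: "t > 0" unfolding t_def by simp
    show ?thesis
    proof (cases "t \<ge> 1")
      case True
      obtain j :: nat where j: "2 powr real j \<le> t" "t < 2 powr (real j + 1)" using dyad[OF True] by blast
      have k: "kern e h = 1 / t powr e"
      proof -
        have "1 \<le> t\<^sup>2" using True by (simp add: one_le_power)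
        then show ?thesis unfolding kern_def t_def[symmetric] by simp
      qed
      have "(2 powr real j) powr e \<le> t powr e" using j(1) e0 by (intro powr_mono2) auto
      then have "2 powr (real j * e) \<le> t powr e" by (simp add: powr_powr)
      then have "1 / t powr e \<le> 1 / 2 powr (real j * e)" using t0 by (intro divide_left_mono) auto
      also have "\<dots> = 2 powr (- real j * e)" by (simp add: powr_minus divide_inverse)
      finally have "kern e h \<le> 2 powr (- real j * e)" unfolding k .
      moreover have "h \<in> ball 0 (2 powr (real j + 1))" using j(2) unfolding t_def by simp
      ultimately have "ennreal (kern e h) \<le> ennreal (2 powr (- real j * e)) * indicator (ball 0 (2 powr (real j + 1))) h"
        by (simp add: ennreal_leI)
      also have "\<dots> \<le> ?A" unfolding e_def by (rule ennreal_term_le_suminf)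
      finally show ?thesis unfolding e_def by (rule add_increasing2[OF zero_le])
    next
      case False
      then have t1: "t < 1" by simp
      have "1 \<le> 1 / t" using t0 t1 by simp
      then obtain j :: nat where j: "2 powr real j \<le> 1 / t" "1 / t < 2 powr (real j + 1)" using dyad by blast
      have k: "kern e h = t powr (2 - 2 * s) * (1 / t) powr N"
      proof -
        have "t\<^sup>2 \<le> 1" using t1 t0 by (simp add: power_le_one)
        then have "kern e h = t powr 2 / t powr e" unfolding kern_def t_def[symmetric] using t0
          by (simp add: powr_realpow)
        also have "\<dots> = t powr (2 - e)" using t0 by (simp add: powr_diff)
        also have "2 - e = (2 - 2 * s) + (- N)" unfolding e_def by simp
        also have "t powr ((2 - 2 * s) + (- N)) = t powr (2 - 2 * s) * (1 / t) powr N"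
        proof -
          have "t powr ((2 - 2 * s) + (- N)) = t powr (2 - 2 * s) * t powr (- N)" by (rule powr_add)
          moreover have "t powr (- N) = (1 / t) powr N"
            using t0 by (simp add: powr_minus powr_divide inverse_eq_divide)
          ultimately show ?thesis by simp
        qed
        finally show ?thesis .
      qed
      have tle: "t \<le> 2 powr (- real j)"
      proof -
        have "t \<le> 1 / 2 powr real j" using j(1) t0 by (simp add: field_simps)
        then show ?thesis by (simp add: powr_minus divide_inverse)
      qed
      have a1: "t powr (2 - 2 * s) \<le> (2 powr (- real j)) powr (2 - 2 * s)"
        using tle t0 s by (intro powr_mono2) auto
      have a2: "(1 / t) powr N \<le> (2 powr (real j + 1)) powr N"
        using j(2) t0 N0 by (intro powr_mono2) auto
      have "kern e h \<le> (2 powr (- real j)) powr (2 - 2 * s) * (2 powr (real j + 1)) powr N"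
        unfolding k using a1 a2 t0 by (intro mult_mono) auto
      also have "\<dots> = 2 powr (- real j * (2 - 2 * s)) * 2 powr ((real j + 1) * N)"
        by (simp add: powr_powr)
      finally have kb: "kern e h \<le> 2 powr (- real j * (2 - 2 * s)) * 2 powr ((real j + 1) * N)" .
      have "2 powr (- real j) < 2 powr (1 - real j)" by (intro powr_less_mono) auto
      then have "t < 2 powr (1 - real j)" using tle by linarith
      then have "h \<in> ball 0 (2 powr (1 - real j))" unfolding t_def by simp
      then have "ennreal (kern e h) \<le> ennreal (2 powr (- real j * (2 - 2 * s)) * 2 powr ((real j + 1) * N)) * indicator (ball 0 (2 powr (1 - real j))) h"
        using kb by (simp add: ennreal_leI)
      also have "\<dots> \<le> ?B" by (rule ennreal_term_le_suminf)
      finally show ?thesis unfolding e_def by (rule add_increasing[OF zero_le])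
    qed
  qed
qed

lemma pow2_pow: "(2 powr x) ^ n = 2 powr (real n * x)"
  by (simp add: powr_power)

lemma kern_int:
  fixes s :: real assumes s: "0 < s" "s < 1"
  shows "\<exists>K0. \<forall>x::'a::euclidean_space. (\<integral>\<^sup>+y. ennreal (kern (real DIM('a) + 2 * s) (x - y)) \<partial>lborel) \<le> ennreal K0"
proof -
  define N where "N = real DIM('a)"
  define \<omega> where "\<omega> = unit_ball_vol N"
  have \<omega>: "\<omega> > 0" unfolding \<omega>_def N_def by simp
  define a where "a = (\<lambda>j::nat. 2 powr (- real j * (N + 2 * s)))"
  define b where "b = (\<lambda>j::nat. 2 powr (- real j * (2 - 2 * s)) * 2 powr ((real j + 1) * N))"
  define \<rho> where "\<rho> = (\<lambda>j::nat. 2 powr (real j + 1))"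
  define \<sigma> where "\<sigma> = (\<lambda>j::nat. 2 powr (1 - real j))"
  define r1 where "r1 = 2 powr (- 2 * s)"
  define r2 where "r2 = 2 powr (- (2 - 2 * s))"
  have r1: "0 \<le> r1" "r1 < 1" unfolding r1_def using s powr_less_mono[of "- 2 * s" 0 2] by auto
  have r2: "0 \<le> r2" "r2 < 1" unfolding r2_def using s powr_less_mono[of "- (2 - 2 * s)" 0 2] by auto
  define M1 where "M1 = \<omega> * 2 powr N"
  define M2 where "M2 = \<omega> * 2 powr (2 * N)"
  have M: "M1 \<ge> 0" "M2 \<ge> 0" unfolding M1_def M2_def using \<omega> by auto
  have ca: "a j * (\<omega> * \<rho> j ^ DIM('a)) = M1 * r1 ^ j" for j
  proof -
    have "a j * (\<omega> * \<rho> j ^ DIM('a)) = \<omega> * (2 powr (- real j * (N + 2 * s)) * 2 powr ((real j + 1) * N))"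
      unfolding a_def \<rho>_def pow2_pow N_def by (simp add: ac_simps)
    also have "2 powr (- real j * (N + 2 * s)) * 2 powr ((real j + 1) * N) = 2 powr N * 2 powr (real j * (- 2 * s))"
    proof -
      have "- real j * (N + 2 * s) + (real j + 1) * N = N + real j * (- 2 * s)" by (simp add: algebra_simps)
      then show ?thesis by (simp only: powr_add[symmetric])
    qed
    finally show ?thesis unfolding M1_def r1_def pow2_pow by (simp add: ac_simps)
  qed
  have cb: "b j * (\<omega> * \<sigma> j ^ DIM('a)) = M2 * r2 ^ j" for j
  proof -
    have "b j * (\<omega> * \<sigma> j ^ DIM('a)) = \<omega> * (2 powr (- real j * (2 - 2 * s)) * 2 powr ((real j + 1) * N) * 2 powr ((1 - real j) * N))"
      unfolding b_def \<sigma>_def pow2_pow N_def by (simp add: ac_simps)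
    also have "2 powr (- real j * (2 - 2 * s)) * 2 powr ((real j + 1) * N) * 2 powr ((1 - real j) * N)
        = 2 powr (2 * N) * 2 powr (real j * (- (2 - 2 * s)))"
    proof -
      have "- real j * (2 - 2 * s) + (real j + 1) * N + (1 - real j) * N = 2 * N + real j * (- (2 - 2 * s))"
        by (simp add: algebra_simps)
      then show ?thesis by (simp only: powr_add[symmetric])
    qed
    finally show ?thesis unfolding M2_def r2_def pow2_pow by (simp add: ac_simps)
  qed
  define K0 where "K0 = M1 / (1 - r1) + M2 / (1 - r2)"
  show ?thesis
  proof (intro exI[of _ K0] allI)
    fix x :: 'a
    have [measurable]: "ball x r \<in> sets borel" for r by simp
    have ind: "indicator (ball 0 r) (x - y) = (indicator (ball x r) y :: ennreal)" for r y
      by (simp add: indicator_def dist_norm norm_minus_commute)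
    have "(\<integral>\<^sup>+y. ennreal (kern (real DIM('a) + 2 * s) (x - y)) \<partial>lborel)
       \<le> (\<integral>\<^sup>+y. (\<Sum>j. ennreal (a j) * indicator (ball x (\<rho> j)) y) + (\<Sum>j. ennreal (b j) * indicator (ball x (\<sigma> j)) y) \<partial>lborel)"
    proof (intro nn_integral_mono)
      fix y
      show "ennreal (kern (real DIM('a) + 2 * s) (x - y)) \<le> (\<Sum>j. ennreal (a j) * indicator (ball x (\<rho> j)) y) + (\<Sum>j. ennreal (b j) * indicator (ball x (\<sigma> j)) y)"
        using kern_bound[OF s, of "x - y"] unfolding ind a_def b_def \<rho>_def \<sigma>_def N_def .
    qed
    also have "\<dots> = (\<integral>\<^sup>+y. (\<Sum>j. ennreal (a j) * indicator (ball x (\<rho> j)) y) \<partial>lborel)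
        + (\<integral>\<^sup>+y. (\<Sum>j. ennreal (b j) * indicator (ball x (\<sigma> j)) y) \<partial>lborel)"
      by (intro nn_integral_add) measurable
    also have "(\<integral>\<^sup>+y. (\<Sum>j. ennreal (a j) * indicator (ball x (\<rho> j)) y) \<partial>lborel)
        = (\<Sum>j. ennreal (a j) * emeasure lborel (ball x (\<rho> j)))"
      by (subst nn_integral_suminf) (auto intro!: suminf_cong nn_integral_cmult_indicator)
    also have "\<dots> = (\<Sum>j. ennreal (M1 * r1 ^ j))"
    proof (intro suminf_cong)
      fix j
      have "emeasure lborel (ball x (\<rho> j)) = ennreal (\<omega> * \<rho> j ^ DIM('a))"
        unfolding \<omega>_def N_def by (rule emeasure_ball) (simp add: \<rho>_def)
      moreover have "a j \<ge> 0" "\<omega> * \<rho> j ^ DIM('a) \<ge> 0" using \<omega> by (auto simp: a_def \<rho>_def)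
      ultimately show "ennreal (a j) * emeasure lborel (ball x (\<rho> j)) = ennreal (M1 * r1 ^ j)"
        using ca[of j] by (simp add: ennreal_mult[symmetric])
    qed
    also have "\<dots> = ennreal (M1 / (1 - r1))" by (rule geom_ennreal[OF r1 M(1)])
    also have "(\<integral>\<^sup>+y. (\<Sum>j. ennreal (b j) * indicator (ball x (\<sigma> j)) y) \<partial>lborel)
        = (\<Sum>j. ennreal (b j) * emeasure lborel (ball x (\<sigma> j)))"
      by (subst nn_integral_suminf) (auto intro!: suminf_cong nn_integral_cmult_indicator)
    also have "\<dots> = (\<Sum>j. ennreal (M2 * r2 ^ j))"
    proof (intro suminf_cong)
      fix j
      have "emeasure lborel (ball x (\<sigma> j)) = ennreal (\<omega> * \<sigma> j ^ DIM('a))"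
        unfolding \<omega>_def N_def by (rule emeasure_ball) (simp add: \<sigma>_def)
      moreover have "b j \<ge> 0" "\<omega> * \<sigma> j ^ DIM('a) \<ge> 0" using \<omega> by (auto simp: b_def \<sigma>_def)
      ultimately show "ennreal (b j) * emeasure lborel (ball x (\<sigma> j)) = ennreal (M2 * r2 ^ j)"
        using cb[of j] by (simp add: ennreal_mult[symmetric])
    qed
    also have "\<dots> = ennreal (M2 / (1 - r2))" by (rule geom_ennreal[OF r2 M(2)])
    also have "ennreal (M1 / (1 - r1)) + ennreal (M2 / (1 - r2)) = ennreal K0"
      unfolding K0_def using M r1 r2 by (simp add: ennreal_plus[symmetric] del: ennreal_plus)
    finally show "(\<integral>\<^sup>+y. ennreal (kern (real DIM('a) + 2 * s) (x - y)) \<partial>lborel) \<le> ennreal K0" .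
  qed
qed

lemma kern_meas[measurable]: "kern e \<in> borel_measurable borel"
  unfolding kern_def by measurable

lemma not_AE_ball:
  fixes P :: "'a::euclidean_space \<Rightarrow> bool"
  assumes "\<And>x. x \<in> ball 0 1 \<Longrightarrow> \<not> P x"
  shows "\<not> (AE x in lborel. P x)"
proof
  assume ae: "AE x in lborel. P x"
  have "AE x in lborel. P x \<longrightarrow> x \<notin> ball 0 1" using assms by (intro AE_I2) auto
  with ae have "AE x in lborel. (x::'a) \<notin> ball 0 1" by (rule AE_mp)
  then have "emeasure lborel {x \<in> space lborel. x \<in> ball (0::'a) 1} = 0" by (rule emeasure_eq_0_AE)
  moreover have "emeasure lborel (ball (0::'a) 1) > 0" by (simp add: emeasure_ball)
  ultimately show False by (simp add: ball_def dist_norm)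
qed

lemma bump_Hs:
  fixes s :: real assumes s: "0 < s" "s < 1"
  shows "(\<lambda>x::'a::euclidean_space. max 0 (1 - norm x)) \<in> Hs s"
proof -
  define u0 where "u0 = (\<lambda>x::'a. max 0 (1 - norm x))"
  define B where "B = ball (0::'a) 1"
  define e where "e = real DIM('a) + 2 * s"
  have [measurable]: "u0 \<in> borel_measurable lborel" unfolding u0_def by measurable
  have [measurable]: "B \<in> sets borel" unfolding B_def by simp
  have u01: "0 \<le> u0 x" "u0 x \<le> 1" for x unfolding u0_def by auto
  have u0out: "x \<notin> B \<Longrightarrow> u0 x = 0" for x unfolding u0_def B_def by auto
  have lip: "\<bar>u0 x - u0 y\<bar> \<le> norm (x - y)" for x y
  proof -
    have "\<bar>norm x - norm y\<bar> \<le> norm (x - y)" by (rule norm_triangle_ineq3)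
    then show ?thesis unfolding u0_def by (auto simp: max_def)
  qed
  have L: "(\<integral>\<^sup>+x. ennreal ((u0 x)\<^sup>2) \<partial>lborel) < \<infinity>"
  proof -
    have "(\<integral>\<^sup>+x. ennreal ((u0 x)\<^sup>2) \<partial>lborel) \<le> (\<integral>\<^sup>+x. indicator B x \<partial>lborel)"
    proof (intro nn_integral_mono)
      fix x show "ennreal ((u0 x)\<^sup>2) \<le> indicator B x"
        using u01[of x] u0out[of x] by (cases "x \<in> B") (auto simp: power_le_one)
    qed
    also have "\<dots> = emeasure lborel B" by simp
    also have "\<dots> < \<infinity>" unfolding B_def by (rule emeasure_lborel_ball_finite)
    finally show ?thesis .
  qed
  obtain K0 where K0: "\<And>x::'a. (\<integral>\<^sup>+y. ennreal (kern e (x - y)) \<partial>lborel) \<le> ennreal K0"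
    using kern_int[OF s] unfolding e_def by blast
  define F where "F = (\<lambda>z::'a \<times> 'a. ennreal ((u0 (fst z) - u0 (snd z))\<^sup>2 / norm (fst z - snd z) powr e))"
  define F1 where "F1 = (\<lambda>z::'a \<times> 'a. ennreal (kern e (fst z - snd z)) * indicator B (fst z))"
  define F2 where "F2 = (\<lambda>z::'a \<times> 'a. ennreal (kern e (fst z - snd z)) * indicator B (snd z))"
  have [measurable]: "F1 \<in> borel_measurable (lborel \<Otimes>\<^sub>M lborel)" unfolding F1_def by measurable
  have [measurable]: "F2 \<in> borel_measurable (lborel \<Otimes>\<^sub>M lborel)" unfolding F2_def by measurable
  have Fle: "F z \<le> F1 z + F2 z" for z
  proof -
    obtain x y where z: "z = (x, y)" by (cases z)
    show ?thesis
    proof (cases "x \<in> B \<or> y \<in> B")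
      case False
      then show ?thesis unfolding z F_def using u0out by auto
    next
      case True
      have d: "(u0 x - u0 y)\<^sup>2 \<le> min 1 ((norm (x - y))\<^sup>2)"
      proof -
        have "\<bar>u0 x - u0 y\<bar> \<le> 1" using u01[of x] u01[of y] by auto
        then have "(u0 x - u0 y)\<^sup>2 \<le> 1" by (simp add: abs_square_le_1)
        moreover have "(u0 x - u0 y)\<^sup>2 \<le> (norm (x - y))\<^sup>2"
          using lip[of x y] by (simp add: abs_le_square_iff[symmetric])
        ultimately show ?thesis by simp
      qed
      have "(u0 x - u0 y)\<^sup>2 / norm (x - y) powr e \<le> kern e (x - y)"
        unfolding kern_def using d by (intro divide_right_mono) auto
      then have "F z \<le> ennreal (kern e (x - y))" unfolding z F_def by (simp add: ennreal_leI)
      also have "\<dots> \<le> F1 z + F2 z" unfolding z F1_def F2_def using True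
        by (auto simp: indicator_def)
      finally show ?thesis .
    qed
  qed
  have "integral\<^sup>N (lborel \<Otimes>\<^sub>M lborel) F \<le> integral\<^sup>N (lborel \<Otimes>\<^sub>M lborel) (\<lambda>z. F1 z + F2 z)"
    by (intro nn_integral_mono Fle)
  also have "\<dots> = integral\<^sup>N (lborel \<Otimes>\<^sub>M lborel) F1 + integral\<^sup>N (lborel \<Otimes>\<^sub>M lborel) F2"
    by (intro nn_integral_add) auto
  also have "integral\<^sup>N (lborel \<Otimes>\<^sub>M lborel) F1 \<le> ennreal K0 * emeasure lborel B"
  proof -
    have "integral\<^sup>N (lborel \<Otimes>\<^sub>M lborel) F1 = (\<integral>\<^sup>+x. \<integral>\<^sup>+y. F1 (x, y) \<partial>lborel \<partial>lborel)"
      by (rule lborel.nn_integral_fst[symmetric]) measurable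
    also have "\<dots> = (\<integral>\<^sup>+x. (\<integral>\<^sup>+y. ennreal (kern e (x - y)) \<partial>lborel) * indicator B x \<partial>lborel)"
      unfolding F1_def by (intro nn_integral_cong) (simp add: nn_integral_multc)
    also have "\<dots> \<le> (\<integral>\<^sup>+x. ennreal K0 * indicator B x \<partial>lborel)"
      by (intro nn_integral_mono mult_right_mono K0) simp
    also have "\<dots> = ennreal K0 * emeasure lborel B" by (rule nn_integral_cmult_indicator) simp
    finally show ?thesis .
  qed
  also have "integral\<^sup>N (lborel \<Otimes>\<^sub>M lborel) F2 \<le> ennreal K0 * emeasure lborel B"
  proof -
    have "integral\<^sup>N (lborel \<Otimes>\<^sub>M lborel) F2 = (\<integral>\<^sup>+y. \<integral>\<^sup>+x. F2 (x, y) \<partial>lborel \<partial>lborel)"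
      by (rule lborel_pair.nn_integral_snd[symmetric]) measurable
    also have "\<dots> = (\<integral>\<^sup>+y. (\<integral>\<^sup>+x. ennreal (kern e (y - x)) \<partial>lborel) * indicator B y \<partial>lborel)"
      unfolding F2_def kern_def by (intro nn_integral_cong) (simp add: nn_integral_multc norm_minus_commute)
    also have "\<dots> \<le> (\<integral>\<^sup>+y. ennreal K0 * indicator B y \<partial>lborel)"
      by (intro nn_integral_mono mult_right_mono K0) simp
    also have "\<dots> = ennreal K0 * emeasure lborel B" by (rule nn_integral_cmult_indicator) simp
    finally show ?thesis .
  qed
  finally have G: "integral\<^sup>N (lborel \<Otimes>\<^sub>M lborel) F \<le> ennreal K0 * emeasure lborel B + ennreal K0 * emeasure lborel B"
    by (simp add: add_mono)
  have "ennreal K0 * emeasure lborel B < \<infinity>"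
    unfolding B_def using emeasure_lborel_ball_finite[of "0::'a" 1] by (simp add: ennreal_mult_less_top)
  then have "integral\<^sup>N (lborel \<Otimes>\<^sub>M lborel) F < \<infinity>"
  proof -
    assume a: "ennreal K0 * emeasure lborel B < \<infinity>"
    have "ennreal K0 * emeasure lborel B + ennreal K0 * emeasure lborel B < \<infinity>"
      using a by (simp add: less_top[symmetric] ennreal_add_eq_top)
    then show ?thesis using G by (rule le_less_trans[rotated])
  qed
  then show ?thesis unfolding Hs_def hs_norm_sq_def u0_def[symmetric] using L
    by (auto simp: F_def e_def)
qed

lemma sigma_nonempty:
  fixes s :: real assumes s: "0 < s" "s < 1"
  shows "Sigma_plus s \<noteq> ({} :: ('a::euclidean_space \<Rightarrow> real) set)"
proof -
  define u0 where "u0 = (\<lambda>x::'a. max 0 (1 - norm x))"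
  have u0: "u0 \<in> Hs s" unfolding u0_def by (rule bump_Hs[OF s])
  have [measurable]: "u0 \<in> borel_measurable lborel" unfolding u0_def by measurable
  have pos: "x \<in> ball 0 1 \<Longrightarrow> u0 x > 0" for x unfolding u0_def by auto
  define n where "n = hs_norm s u0"
  have fin: "hs_norm_sq s u0 < \<infinity>" using u0 unfolding Hs_def by auto
  have n: "n > 0"
  proof (rule ccontr)
    assume "\<not> n > 0"
    then have "n = 0" using hs_norm_nonneg[of s u0] unfolding n_def by simp
    then have "enn2real (hs_norm_sq s u0) = 0" unfolding n_def hs_norm_def by simp
    then have "hs_norm_sq s u0 = 0" using fin by (auto simp: enn2real_eq_0_iff)
    then have "(\<integral>\<^sup>+ x. ennreal ((u0 x)\<^sup>2) \<partial>lborel) = 0" unfolding hs_norm_sq_def by simp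
    then have "AE x in lborel. ennreal ((u0 x)\<^sup>2) = 0" by (subst (asm) nn_integral_0_iff_AE) auto
    moreover have "\<not> (AE x in lborel. ennreal ((u0 x)\<^sup>2) = 0)"
    proof (rule not_AE_ball)
      fix x :: 'a assume "x \<in> ball 0 1"
      then have "u0 x > 0" by (rule pos)
      then show "ennreal ((u0 x)\<^sup>2) \<noteq> 0" by simp
    qed
    ultimately show False by simp
  qed
  define v where "v = (\<lambda>x. (1 / n) * u0 x)"
  have v: "v \<in> Hs s" unfolding v_def by (rule Hs_scale[OF u0])
  have vn: "hs_norm s v = 1" unfolding v_def hs_norm_scale[OF u0] n_def[symmetric] using n by simp
  have "\<not> (AE x in lborel. max (v x) 0 = 0)"
  proof (rule not_AE_ball)
    fix x :: 'a assume "x \<in> ball 0 1"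
    then have "u0 x > 0" by (rule pos)
    then show "max (v x) 0 \<noteq> 0" using n by (simp add: v_def)
  qed
  then have "v \<in> Sigma_plus s" unfolding Sigma_plus_def using v vn by auto
  then show ?thesis by auto
qed

lemma hs_norm_one:
  assumes "v \<in> Hs s" "hs_norm s v = 1"
  shows "hs_norm_sq s v \<le> 1"
proof -
  have fin: "hs_norm_sq s v < \<infinity>" using assms(1) unfolding Hs_def by auto
  have "enn2real (hs_norm_sq s v) = 1" using assms(2) unfolding hs_norm_def by simp
  moreover have "hs_norm_sq s v = ennreal (enn2real (hs_norm_sq s v))" using fin by simp
  ultimately have "hs_norm_sq s v = 1" by simp
  then show ?thesis by simp
qed

lemma A_props:
  fixes a v :: "'a::euclidean_space \<Rightarrow> real"
  assumes [measurable]: "a \<in> borel_measurable lborel" and a: "\<forall>x. 0 < a x \<and> a x \<le> 1"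
    and v: "v \<in> Sigma_plus s" and q: "q > 0"
    and S: "(\<integral>\<^sup>+x. ennreal ((max (v x) 0) powr q) \<partial>lborel) \<le> ennreal S" and S0: "S \<ge> 0"
  shows "(\<integral>x. a x * (max (v x) 0) powr q \<partial>lborel) > 0"
    and "(\<integral>x. a x * (max (v x) 0) powr q \<partial>lborel) \<le> S"
proof -
  have [measurable]: "v \<in> borel_measurable lborel" using v unfolding Sigma_plus_def Hs_def by auto
  define f where "f = (\<lambda>x. a x * (max (v x) 0) powr q)"
  have fm[measurable]: "f \<in> borel_measurable lborel" unfolding f_def by measurable
  have f0: "f x \<ge> 0" for x unfolding f_def by (intro mult_nonneg_nonneg) (use a in \<open>auto simp: less_imp_le\<close>)
  have fle: "ennreal (f x) \<le> ennreal ((max (v x) 0) powr q)" for x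
    unfolding f_def using a[rule_format, of x] by (intro ennreal_leI mult_left_le_one_le) auto
  have nnf: "(\<integral>\<^sup>+x. ennreal (f x) \<partial>lborel) \<le> ennreal S"
    using nn_integral_mono[of lborel "\<lambda>x. ennreal (f x)", OF fle] S by (rule order_trans)
  have int: "integrable lborel f"
  proof (rule integrableI_bounded)
    show "(\<integral>\<^sup>+x. ennreal (norm (f x)) \<partial>lborel) < \<infinity>"
      using nnf f0 by (simp add: le_less_trans)
  qed simp
  have eq: "(\<integral>\<^sup>+x. ennreal (f x) \<partial>lborel) = ennreal (\<integral>x. f x \<partial>lborel)"
    by (rule nn_integral_eq_integral[OF int]) (simp add: f0)
  have "ennreal (\<integral>x. f x \<partial>lborel) \<le> ennreal S" using nnf unfolding eq .
  moreover have "(\<integral>x. f x \<partial>lborel) \<ge> 0" by (intro integral_nonneg_AE) (simp add: f0)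
  ultimately show "(\<integral>x. a x * (max (v x) 0) powr q \<partial>lborel) \<le> S"
    unfolding f_def[symmetric] using S0 by simp
  have ne: "(\<integral>x. f x \<partial>lborel) \<noteq> 0"
  proof
    assume "(\<integral>x. f x \<partial>lborel) = 0"
    then have "AE x in lborel. f x = 0" using integral_nonneg_eq_0_iff_AE[OF int] f0 by simp
    moreover have "f x = 0 \<Longrightarrow> max (v x) 0 = 0" for x unfolding f_def using a[rule_format, of x] q by auto
    ultimately have "AE x in lborel. max (v x) 0 = 0" by auto
    then show False using v unfolding Sigma_plus_def by auto
  qed
  then show "(\<integral>x. a x * (max (v x) 0) powr q \<partial>lborel) > 0"
    using \<open>(\<integral>x. f x \<partial>lborel) \<ge> 0\<close> unfolding f_def by simp
qed

theorem lemma4p1: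
  fixes s p :: real and a :: "'a::euclidean_space \<Rightarrow> real"
    and f :: "('a \<Rightarrow> real) \<Rightarrow> real"
  assumes s: "0 < s" "s < 1"
    and N: "real DIM('a) > 2 * s"
    and p: "1 < p" "p < (real DIM('a) + 2 * s) / (real DIM('a) - 2 * s)"
    and a_meas: "a \<in> borel_measurable lborel"
    and a_range: "\<forall>x. 0 < a x \<and> a x \<le> 1"
    and a_inf: "(INF x. a x) > 0"
    and a_ne1: "emeasure lborel {x. a x \<noteq> 1} > 0"
    and a_lim: "(a \<longlongrightarrow> 1) at_infinity"
    and f: "f \<in> Hminus s" "nonneg_functional s f"
  shows
    "(\<forall>u\<in>Hs s. \<forall>\<epsilon>\<in>{0<..<1::real}.
        (1 - \<epsilon>) * I_fun s p (\<lambda>x. a x / (1 - \<epsilon>)) (\<lambda>_. 0) u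
          - 1 / (2 * \<epsilon>) * (hminus_norm s f)\<^sup>2 \<le> I_fun s p a f u
      \<and> I_fun s p a f u \<le> (1 + \<epsilon>) * I_fun s p (\<lambda>x. a x / (1 + \<epsilon>)) (\<lambda>_. 0) u
          + 1 / (2 * \<epsilon>) * (hminus_norm s f)\<^sup>2)
   \<and> (\<forall>v\<in>Sigma_plus s. \<forall>\<epsilon>\<in>{0<..<1::real}.
        (1 - \<epsilon>) powr ((p + 1) / (p - 1)) * J_fun s p a (\<lambda>_. 0) v
          - 1 / (2 * \<epsilon>) * (hminus_norm s f)\<^sup>2 \<le> J_fun s p a f v
      \<and> J_fun s p a f v \<le> (1 + \<epsilon>) powr ((p + 1) / (p - 1)) * J_fun s p a (\<lambda>_. 0) v
          + 1 / (2 * \<epsilon>) * (hminus_norm s f)\<^sup>2)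
   \<and> (\<exists>d0>0. \<forall>g\<in>Hminus s. nonneg_functional s g \<longrightarrow> hminus_norm s g \<le> d0 \<longrightarrow>
        (INF v\<in>Sigma_plus s. J_fun s p a g v) > 0)"
proof -
  define q where "q = p + 1"
  have q2: "2 < q" unfolding q_def using p by simp
  have qN: "q < 2 * real DIM('a) / (real DIM('a) - 2 * s)"
  proof -
    have d: "real DIM('a) - 2 * s > 0" using N by simp
    have "q = p + 1" by (rule q_def)
    also have "p + 1 < (real DIM('a) + 2 * s) / (real DIM('a) - 2 * s) + 1" using p by simp
    also have "\<dots> = 2 * real DIM('a) / (real DIM('a) - 2 * s)" using d by (simp add: field_simps)
    finally show ?thesis .
  qed
  obtain S0 where S0: "\<And>u::'a \<Rightarrow> real. u \<in> Hs s \<Longrightarrow> hs_norm_sq s u \<le> 1 \<Longrightarrow>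
      (\<integral>\<^sup>+x. ennreal ((max (u x) 0) powr q) \<partial>lborel) \<le> ennreal S0"
    using embed[OF s(1) N q2 qN] by blast
  define S where "S = max S0 1"
  have S1: "S \<ge> 1" unfolding S_def by simp
  have SS: "(\<integral>\<^sup>+x. ennreal ((max (u x) 0) powr q) \<partial>lborel) \<le> ennreal S"
    if "u \<in> Hs s" "hs_norm_sq s u \<le> 1" for u :: "'a \<Rightarrow> real"
    using S0[OF that] unfolding S_def by (rule order_trans) (simp add: ennreal_leI)
  have Ap: "(\<integral>x. a x * (max (v x) 0) powr (p + 1) \<partial>lborel) > 0"
      and AS: "(\<integral>x. a x * (max (v x) 0) powr (p + 1) \<partial>lborel) \<le> S"
    if v: "v \<in> Sigma_plus s" for v
  proof -
    have vH: "v \<in> Hs s" "hs_norm s v = 1" using v unfolding Sigma_plus_def by auto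
    have b: "(\<integral>\<^sup>+x. ennreal ((max (v x) 0) powr q) \<partial>lborel) \<le> ennreal S"
      by (rule SS[OF vH(1) hs_norm_one[OF vH]])
    show "(\<integral>x. a x * (max (v x) 0) powr (p + 1) \<partial>lborel) > 0"
      using A_props(1)[OF a_meas a_range v _ b] q2 S1 unfolding q_def by simp
    show "(\<integral>x. a x * (max (v x) 0) powr (p + 1) \<partial>lborel) \<le> S"
      using A_props(2)[OF a_meas a_range v _ b] q2 S1 unfolding q_def by simp
  qed
  have part1: "\<forall>u\<in>Hs s. \<forall>\<epsilon>\<in>{0<..<1::real}.
        (1 - \<epsilon>) * I_fun s p (\<lambda>x. a x / (1 - \<epsilon>)) (\<lambda>_. 0) u
          - 1 / (2 * \<epsilon>) * (hminus_norm s f)\<^sup>2 \<le> I_fun s p a f u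
      \<and> I_fun s p a f u \<le> (1 + \<epsilon>) * I_fun s p (\<lambda>x. a x / (1 + \<epsilon>)) (\<lambda>_. 0) u
          + 1 / (2 * \<epsilon>) * (hminus_norm s f)\<^sup>2"
    using I_bounds[OF f(1)] by auto
  have part2: "\<forall>v\<in>Sigma_plus s. \<forall>\<epsilon>\<in>{0<..<1::real}.
        (1 - \<epsilon>) powr ((p + 1) / (p - 1)) * J_fun s p a (\<lambda>_. 0) v
          - 1 / (2 * \<epsilon>) * (hminus_norm s f)\<^sup>2 \<le> J_fun s p a f v
      \<and> J_fun s p a f v \<le> (1 + \<epsilon>) powr ((p + 1) / (p - 1)) * J_fun s p a (\<lambda>_. 0) v
          + 1 / (2 * \<epsilon>) * (hminus_norm s f)\<^sup>2"
  proof (intro ballI conjI)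
    fix v :: "'a \<Rightarrow> real" and \<epsilon> :: real assume v: "v \<in> Sigma_plus s" and e: "\<epsilon> \<in> {0<..<1::real}"
    have vH: "v \<in> Hs s" "hs_norm s v = 1" using v unfolding Sigma_plus_def by auto
    have e': "0 < \<epsilon>" "\<epsilon> < 1" using e by auto
    show "(1 - \<epsilon>) powr ((p + 1) / (p - 1)) * J_fun s p a (\<lambda>_. 0) v
          - 1 / (2 * \<epsilon>) * (hminus_norm s f)\<^sup>2 \<le> J_fun s p a f v"
      by (rule J_bounds(1)[OF f(1) vH p(1) Ap[OF v] e'])
    show "J_fun s p a f v \<le> (1 + \<epsilon>) powr ((p + 1) / (p - 1)) * J_fun s p a (\<lambda>_. 0) v
          + 1 / (2 * \<epsilon>) * (hminus_norm s f)\<^sup>2"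
      by (rule J_bounds(2)[OF f(1) vH p(1) Ap[OF v] e'])
  qed
  define t1 where "t1 = min 1 ((q / (4 * S)) powr (1 / (q - 2)))"
  have t1: "t1 > 0" "t1 \<le> 1" unfolding t1_def using q2 S1 by auto
  have t1q: "t1 powr q / q * S \<le> t1\<^sup>2 / 4"
  proof -
    have "t1 powr (q - 2) \<le> ((q / (4 * S)) powr (1 / (q - 2))) powr (q - 2)"
      unfolding t1_def using q2 t1 by (intro powr_mono2) (auto simp: t1_def)
    also have "\<dots> = q / (4 * S)" using q2 S1 by (simp add: powr_powr)
    finally have h: "t1 powr (q - 2) \<le> q / (4 * S)" .
    have "t1 powr q = t1 powr (2 + (q - 2))" by simp
    also have "\<dots> = t1 powr 2 * t1 powr (q - 2)" by (rule powr_add)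
    also have "t1 powr 2 = t1\<^sup>2" using t1 by simp
    finally have "t1 powr q = t1\<^sup>2 * t1 powr (q - 2)" .
    then have "t1 powr q / q * S = t1\<^sup>2 * (t1 powr (q - 2) * S / q)" by simp
    also have "\<dots> \<le> t1\<^sup>2 * ((q / (4 * S)) * S / q)"
      using h q2 S1 by (intro mult_left_mono divide_right_mono mult_right_mono) auto
    also have "\<dots> = t1\<^sup>2 / 4" using q2 S1 by simp
    finally show ?thesis .
  qed
  define d0 where "d0 = t1 / 8"
  have d0: "d0 > 0" unfolding d0_def using t1 by simp
  have part3: "\<forall>g\<in>Hminus s. nonneg_functional s g \<longrightarrow> hminus_norm s g \<le> d0 \<longrightarrow>
        (INF v\<in>Sigma_plus s. J_fun s p a g v) > 0"
  proof (intro ballI impI)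
    fix g :: "('a \<Rightarrow> real) \<Rightarrow> real" assume g: "g \<in> Hminus s" and gn: "nonneg_functional s g" and gd: "hminus_norm s g \<le> d0"
    have lb: "t1\<^sup>2 / 8 \<le> J_fun s p a g v" if v: "v \<in> Sigma_plus s" for v
    proof -
      have vH: "v \<in> Hs s" "hs_norm s v = 1" using v unfolding Sigma_plus_def by auto
      define A where "A = (\<integral>x. a x * (max (v x) 0) powr (p + 1) \<partial>lborel)"
      have A: "0 < A" "A \<le> S" unfolding A_def using Ap[OF v] AS[OF v] by auto
      have gv: "g v \<le> d0"
        using hminus_bound[OF g vH(1)] vH(2) gd by simp
      have "t1\<^sup>2 / 8 \<le> t1\<^sup>2 / 2 - t1 powr q / q * A - t1 * g v"
      proof -
        have "t1 powr q / q * A \<le> t1 powr q / q * S" using A q2 by (intro mult_left_mono) auto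
        moreover have "t1 * g v \<le> t1 * d0" using gv t1 by (intro mult_left_mono) auto
        moreover have "t1 * d0 \<le> t1\<^sup>2 / 8" unfolding d0_def by (simp add: power2_eq_square)
        ultimately show ?thesis using t1q by linarith
      qed
      also have "\<dots> = I_fun s p a g (\<lambda>x. t1 * v x)"
        using I_scale[OF g vH(1) t1(1), of p a] vH(2) p unfolding A_def q_def by simp
      also have "\<dots> \<le> J_fun s p a g v"
        unfolding J_fun_def
        using J_bounds(3)[OF g vH p(1) Ap[OF v], of "1/2"] t1 by (intro cSUP_upper) auto
      finally show ?thesis .
    qed
    have "t1\<^sup>2 / 8 \<le> (INF v\<in>Sigma_plus s. J_fun s p a g v)"
      using sigma_nonempty[OF s] lb by (intro cINF_greatest) auto
    moreover have "t1\<^sup>2 / 8 > 0" using t1 by simp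
    ultimately show "(INF v\<in>Sigma_plus s. J_fun s p a g v) > 0" by linarith
  qed
  show ?thesis using part1 part2 part3 d0 by blast
qed


end
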